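(* Let $H$, $A$, $Z$ be as in the context, and assume $Z_{ijkl}(x)=0$ for all $x\in\partial\mathbb{R}^n_+$ and all $i,j,k,l\in\{1,\dots,n\}$. Then $H_{ik}(x)=A_{ik}(x)=0$ for all $x\in\partial\mathbb{R}^n_+$ and all $i,k\in\{1,\dots,n-1\}$.
   Context: Let $n\ge6$, $d=\lfloor\frac{n-2}{2}\rfloor$, $\mathbb{R}^n_+=\{x\in\mathbb{R}^n:x_n\ge0\}$, $\partial\mathbb{R}^n_+=\{x_n=0\}$. Let $H=(H_{ik})$ be a trace-free symmetric two-tensor on $\mathbb{R}^n_+$ whose components are polynomials $H_{ik}(x)=\sum_{2\le|\alpha|\le d}h_{ik,\alpha}x^\alpha$, such that: $H_{in}(x)=0$ for all $x\in\mathbb{R}^n_+$ and all $i$; $\sum_k H_{ik}(x)x_k=0$ for all $x\in\partial\mathbb{R}^n_+$ and all $i$; $\partial_nH_{ik}(x)=0$ for all $x\in\partial\mathbb{R}^n_+$ and all $i,k$. Define $A_{ik}=\sum_m\partial_i\partial_mH_{mk}+\sum_m\partial_m\partial_kH_{im}-\Delta H_{ik}-\frac{1}{n-1}\sum_{m,p}\partial_m\partial_pH_{mp}\,\delta_{ik}$ and $Z_{ijkl}=\partial_i\partial_kH_{jl}-\partial_i\partial_lH_{jk}-\partial_j\partial_kH_{il}+\partial_j\partial_lH_{ik}+\frac{1}{n-2}(A_{jl}\delta_{ik}-A_{jk}\delta_{il}-A_{il}\delta_{jk}+A_{ik}\delta_{jl})$. *)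

theory Defs
  imports "HOL-Analysis.Analysis"
begin

text \<open>Points of R^n are modelled as functions nat \<Rightarrow> real, coordinates 1..n.
  Multi-indices are functions nat \<Rightarrow> nat supported in {1..n}.\<close>

definition monom :: "nat \<Rightarrow> (nat \<Rightarrow> nat) \<Rightarrow> (nat \<Rightarrow> real) \<Rightarrow> real" where
  "monom n \<alpha> x = (\<Prod>j\<in>{1..n}. x j ^ \<alpha> j)"

definition mindices :: "nat \<Rightarrow> nat \<Rightarrow> (nat \<Rightarrow> nat) set" where
  "mindices n d = {\<alpha>. (\<forall>j. j \<notin> {1..n} \<longrightarrow> \<alpha> j = 0) \<and>
                       2 \<le> (\<Sum>j\<in>{1..n}. \<alpha> j) \<and> (\<Sum>j\<in>{1..n}. \<alpha> j) \<le> d}"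

definition pd :: "nat \<Rightarrow> ((nat \<Rightarrow> real) \<Rightarrow> real) \<Rightarrow> (nat \<Rightarrow> real) \<Rightarrow> real" where
  "pd j f x = deriv (\<lambda>t. f (x(j := t))) (x j)"

definition kdelta :: "nat \<Rightarrow> nat \<Rightarrow> real" where
  "kdelta i k = (if i = k then 1 else 0)"

definition Aten :: "nat \<Rightarrow> (nat \<Rightarrow> nat \<Rightarrow> (nat \<Rightarrow> real) \<Rightarrow> real)
                     \<Rightarrow> nat \<Rightarrow> nat \<Rightarrow> (nat \<Rightarrow> real) \<Rightarrow> real" where
  "Aten n H i k x =
     (\<Sum>m\<in>{1..n}. pd i (pd m (H m k)) x)
   + (\<Sum>m\<in>{1..n}. pd m (pd k (H i m)) x)
   - (\<Sum>m\<in>{1..n}. pd m (pd m (H i k)) x)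
   - 1 / (real n - 1) * (\<Sum>m\<in>{1..n}. \<Sum>p\<in>{1..n}. pd m (pd p (H m p)) x) * kdelta i k"

definition Zten :: "nat \<Rightarrow> (nat \<Rightarrow> nat \<Rightarrow> (nat \<Rightarrow> real) \<Rightarrow> real)
                     \<Rightarrow> nat \<Rightarrow> nat \<Rightarrow> nat \<Rightarrow> nat \<Rightarrow> (nat \<Rightarrow> real) \<Rightarrow> real" where
  "Zten n H i j k l x =
     pd i (pd k (H j l)) x - pd i (pd l (H j k)) x
   - pd j (pd k (H i l)) x + pd j (pd l (H i k)) x
   + 1 / (real n - 2) *
       (Aten n H j l x * kdelta i k - Aten n H j k x * kdelta i l
        - Aten n H i l x * kdelta j k + Aten n H i k x * kdelta j l)"

end

theory Submission
  imports Defs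
begin

definition deg :: "nat \<Rightarrow> (nat\<Rightarrow>nat) \<Rightarrow> nat" where "deg n \<alpha> = (\<Sum>j\<in>{1..n}. \<alpha> j)"
definition dmon :: "nat \<Rightarrow> (nat\<Rightarrow>nat) \<Rightarrow> (nat\<Rightarrow>nat)" where "dmon i \<alpha> = \<alpha>(i := \<alpha> i - 1)"

definition isp :: "nat \<Rightarrow> ((nat\<Rightarrow>real)\<Rightarrow>real) \<Rightarrow> bool" where
 "isp n f \<longleftrightarrow> (\<exists>(A::nat set) c e. finite A \<and> (\<forall>x. f x = (\<Sum>a\<in>A. c a * monom n (e a) x)))"
definition hp :: "nat \<Rightarrow> nat \<Rightarrow> ((nat\<Rightarrow>real)\<Rightarrow>real) \<Rightarrow> bool" where
 "hp n k f \<longleftrightarrow> (\<exists>(A::nat set) c e. finite A \<and> (\<forall>a\<in>A. deg n (e a) = k) \<and> (\<forall>x. f x = (\<Sum>a\<in>A. c a * monom n (e a) x)))"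

lemma hp_sumI:
  fixes A :: "'a set"
  assumes "finite A" "\<forall>a\<in>A. deg n (e a) = k"
  shows "hp n k (\<lambda>x. \<Sum>a\<in>A. c a * monom n (e a) x)"
proof -
  obtain g where g: "bij_betw g {0..<card A} A" using ex_bij_betw_nat_finite[OF assms(1)] by blast
  have "\<And>x. (\<Sum>a\<in>A. c a * monom n (e a) x) = (\<Sum>a\<in>{0..<card A}. c (g a) * monom n (e (g a)) x)"
    using sum.reindex_bij_betw[OF g, symmetric] by blast
  moreover have "\<forall>a\<in>{0..<card A}. deg n (e (g a)) = k" using g assms(2) bij_betwE by blast
  ultimately show ?thesis unfolding hp_def
    by (intro exI[of _ "{0..<card A}"] exI[of _ "c \<circ> g"] exI[of _ "e \<circ> g"]) auto
qed

lemma isp_sumI: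
  fixes A :: "'a set"
  assumes "finite A"
  shows "isp n (\<lambda>x. \<Sum>a\<in>A. c a * monom n (e a) x)"
proof -
  obtain g where g: "bij_betw g {0..<card A} A" using ex_bij_betw_nat_finite[OF assms(1)] by blast
  have "\<And>x. (\<Sum>a\<in>A. c a * monom n (e a) x) = (\<Sum>a\<in>{0..<card A}. c (g a) * monom n (e (g a)) x)"
    using sum.reindex_bij_betw[OF g, symmetric] by blast
  then show ?thesis unfolding isp_def
    by (intro exI[of _ "{0..<card A}"] exI[of _ "c \<circ> g"] exI[of _ "e \<circ> g"]) auto
qed

lemma hp_isp: "hp n k f \<Longrightarrow> isp n f"
  unfolding hp_def isp_def by blast

lemma monom_line:
  assumes "i \<in> {1..n}"
  shows "monom n \<alpha> (x(i:=t)) = t^(\<alpha> i) * (\<Prod>j\<in>{1..n}-{i}. x j ^ \<alpha> j)"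
proof -
  have "monom n \<alpha> (x(i:=t)) = (\<Prod>j\<in>{1..n}. (x(i:=t)) j ^ \<alpha> j)"
    by (simp only: monom_def)
  also have "\<dots> = (x(i:=t)) i ^ \<alpha> i * (\<Prod>j\<in>{1..n}-{i}. (x(i:=t)) j ^ \<alpha> j)"
    by (rule prod.remove[OF _ assms]) simp
  also have "(\<Prod>j\<in>{1..n}-{i}. (x(i:=t)) j ^ \<alpha> j) = (\<Prod>j\<in>{1..n}-{i}. x j ^ \<alpha> j)"
    by (rule prod.cong) auto
  finally show ?thesis by (simp only: fun_upd_same)
qed

lemma monom_split:
  assumes "i \<in> {1..n}"
  shows "monom n \<alpha> x = x i^(\<alpha> i) * (\<Prod>j\<in>{1..n}-{i}. x j ^ \<alpha> j)"
  using monom_line[OF assms, of \<alpha> x "x i"] by simp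

lemma monom_dmon:
  assumes "i \<in> {1..n}"
  shows "monom n (dmon i \<alpha>) x = x i^(\<alpha> i - 1) * (\<Prod>j\<in>{1..n}-{i}. x j ^ \<alpha> j)"
proof -
  have "monom n (dmon i \<alpha>) x = x i^(dmon i \<alpha> i) * (\<Prod>j\<in>{1..n}-{i}. x j ^ dmon i \<alpha> j)"
    by (rule monom_split[OF assms])
  also have "(\<Prod>j\<in>{1..n}-{i}. x j ^ dmon i \<alpha> j) = (\<Prod>j\<in>{1..n}-{i}. x j ^ \<alpha> j)"
    by (rule prod.cong) (auto simp: dmon_def)
  finally show ?thesis by (simp only: dmon_def fun_upd_same)
qed

lemma monom_out:
  assumes "i \<notin> {1..n}"
  shows "monom n \<alpha> (x(i:=t)) = monom n \<alpha> x"
  unfolding monom_def using assms by (intro prod.cong) auto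

lemma DERIV_monom:
  assumes "i \<in> {1..n}"
  shows "((\<lambda>t. monom n \<alpha> (x(i:=t))) has_real_derivative (real (\<alpha> i) * monom n (dmon i \<alpha>) x)) (at (x i))"
proof -
  let ?C = "(\<Prod>j\<in>{1..n}-{i}. x j ^ \<alpha> j)"
  have "((\<lambda>t. t^(\<alpha> i) * ?C) has_real_derivative (real (\<alpha> i) * x i ^ (\<alpha> i - Suc 0)) * ?C) (at (x i))"
    by (intro DERIV_cmult_right DERIV_pow)
  moreover have "(\<lambda>t. monom n \<alpha> (x(i:=t))) = (\<lambda>t. t^(\<alpha> i) * ?C)"
    using monom_line[OF assms] by auto
  ultimately show ?thesis using monom_dmon[OF assms, of \<alpha> x] by (simp add: mult.assoc)
qed

lemma rep_DERIV:
  assumes "finite A" "\<forall>x. f x = (\<Sum>a\<in>A. c a * monom n (e a) x)" "i \<in> {1..n}"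
  shows "((\<lambda>t. f (x(i:=t))) has_real_derivative (\<Sum>a\<in>A. c a * (real (e a i) * monom n (dmon i (e a)) x))) (at (x i))"
proof -
  have "((\<lambda>t. \<Sum>a\<in>A. c a * monom n (e a) (x(i:=t))) has_real_derivative (\<Sum>a\<in>A. c a * (real (e a i) * monom n (dmon i (e a)) x))) (at (x i))"
    by (intro DERIV_sum DERIV_cmult DERIV_monom[OF assms(3)])
  moreover have "(\<lambda>t. f (x(i:=t))) = (\<lambda>t. \<Sum>a\<in>A. c a * monom n (e a) (x(i:=t)))"
    using assms(2) by auto
  ultimately show ?thesis by simp
qed

lemma rep_pd:
  assumes "finite A" "\<forall>x. f x = (\<Sum>a\<in>A. c a * monom n (e a) x)" "i \<in> {1..n}"
  shows "pd i f x = (\<Sum>a\<in>A. c a * (real (e a i) * monom n (dmon i (e a)) x))"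
  unfolding pd_def by (rule DERIV_imp_deriv[OF rep_DERIV[OF assms]])

lemma rep_line_out:
  assumes "\<forall>x. f x = (\<Sum>a\<in>A. c a * monom n (e a) x)" "i \<notin> {1..n}"
  shows "(\<lambda>t. f (x(i:=t))) = (\<lambda>t. f x)"
  using assms by (auto simp: monom_out)

lemma rep_pd_out:
  assumes "\<forall>x. f x = (\<Sum>a\<in>A. c a * monom n (e a) x)" "i \<notin> {1..n}"
  shows "pd i f x = 0"
  unfolding pd_def rep_line_out[OF assms] by (rule DERIV_imp_deriv[OF DERIV_const])

lemma isp_DERIV:
  assumes "isp n f"
  shows "((\<lambda>t. f (x(i:=t))) has_real_derivative pd i f x) (at (x i))"
proof -
  obtain A :: "nat set" and c e where r: "finite A" "\<forall>x. f x = (\<Sum>a\<in>A. c a * monom n (e a) x)"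
    using assms unfolding isp_def by blast
  show ?thesis
  proof (cases "i \<in> {1..n}")
    case True
    show ?thesis by (subst rep_pd[OF r True]) (rule rep_DERIV[OF r True])
  next
    case False
    have "pd i f x = 0" by (rule rep_pd_out[OF r(2) False])
    moreover have "(\<lambda>t. f (x(i:=t))) = (\<lambda>t. f x)" by (rule rep_line_out[OF r(2) False])
    ultimately show ?thesis by (simp only:) (rule DERIV_const)
  qed
qed

lemma pd_line: "pd i f x = deriv (\<lambda>t. f (x(i:=t))) (x i)"
  by (simp add: pd_def)

lemma pd_add: "isp n f \<Longrightarrow> isp n g \<Longrightarrow> pd i (\<lambda>x. f x + g x) x = pd i f x + pd i g x"
  unfolding pd_line[of i "\<lambda>x. f x + g x"]
  by (rule DERIV_imp_deriv, intro DERIV_add isp_DERIV)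

lemma pd_diff: "isp n f \<Longrightarrow> isp n g \<Longrightarrow> pd i (\<lambda>x. f x - g x) x = pd i f x - pd i g x"
  unfolding pd_line[of i "\<lambda>x. f x - g x"]
  by (rule DERIV_imp_deriv, intro DERIV_diff isp_DERIV)

lemma pd_mult: "isp n f \<Longrightarrow> isp n g \<Longrightarrow> pd i (\<lambda>x. f x * g x) x = pd i f x * g x + f x * pd i g x"
  unfolding pd_line[of i "\<lambda>x. f x * g x"]
  apply (rule DERIV_imp_deriv)
  using DERIV_mult[OF isp_DERIV[of n f x i] isp_DERIV[of n g x i]] by (simp add: mult.commute)

lemma pd_cmult: "isp n f \<Longrightarrow> pd i (\<lambda>x. c * f x) x = c * pd i f x"
  unfolding pd_line[of i "\<lambda>x. c * f x"]
  by (rule DERIV_imp_deriv, intro DERIV_cmult isp_DERIV)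

lemma pd_sum: "finite S \<Longrightarrow> (\<And>j. j \<in> S \<Longrightarrow> isp n (f j)) \<Longrightarrow> pd i (\<lambda>x. \<Sum>j\<in>S. f j x) x = (\<Sum>j\<in>S. pd i (f j) x)"
  unfolding pd_line[of i "\<lambda>x. \<Sum>j\<in>S. f j x"]
  by (rule DERIV_imp_deriv, intro DERIV_sum isp_DERIV) auto

lemma pd_const: "pd i (\<lambda>x. c) x = 0"
  unfolding pd_def by (rule DERIV_imp_deriv[OF DERIV_const])

lemma pd_zero_fun: "(\<And>x. f x = 0) \<Longrightarrow> pd i f x = 0"
proof -
  assume "\<And>x. f x = 0"
  then have "f = (\<lambda>x. 0)" by auto
  then show ?thesis by (simp add: pd_const)
qed

lemma pd_coord: "pd i (\<lambda>x. x a) x = kdelta i a"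
proof (cases "i = a")
  case True
  have "(\<lambda>t. (x(i:=t)) a) = (\<lambda>t. t)" using True by auto
  then show ?thesis using True unfolding pd_def kdelta_def by (simp add: DERIV_imp_deriv[OF DERIV_ident])
next
  case False
  have "(\<lambda>t. (x(i:=t)) a) = (\<lambda>t. x a)" using False by auto
  then show ?thesis using False unfolding pd_def kdelta_def by (simp add: pd_const[unfolded pd_def])
qed

lemma hp_zero: "hp n k (\<lambda>x. 0)"
  unfolding hp_def by (intro exI[of _ "{}"]) auto

lemma hp_add:
  assumes "hp n k f" "hp n k g"
  shows "hp n k (\<lambda>x. f x + g x)"
proof -
  obtain A :: "nat set" and c e where a: "finite A" "\<forall>a\<in>A. deg n (e a) = k" "\<forall>x. f x = (\<Sum>a\<in>A. c a * monom n (e a) x)"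
    using assms(1) unfolding hp_def by blast
  obtain B :: "nat set" and d e2 where b: "finite B" "\<forall>a\<in>B. deg n (e2 a) = k" "\<forall>x. g x = (\<Sum>a\<in>B. d a * monom n (e2 a) x)"
    using assms(2) unfolding hp_def by blast
  have "hp n k (\<lambda>x. \<Sum>a\<in>A <+> B. case_sum c d a * monom n (case_sum e e2 a) x)"
    by (rule hp_sumI) (use a b in auto)
  moreover have "\<And>x. (\<Sum>a\<in>A <+> B. case_sum c d a * monom n (case_sum e e2 a) x) = f x + g x"
    using a b by (simp add: sum.Plus comp_def)
  ultimately show ?thesis by simp
qed

lemma hp_cmult:
  assumes "hp n k f"
  shows "hp n k (\<lambda>x. r * f x)"
proof -
  obtain A :: "nat set" and c e where a: "finite A" "\<forall>a\<in>A. deg n (e a) = k" "\<forall>x. f x = (\<Sum>a\<in>A. c a * monom n (e a) x)"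
    using assms(1) unfolding hp_def by blast
  have "hp n k (\<lambda>x. \<Sum>a\<in>A. (r * c a) * monom n (e a) x)"
    by (rule hp_sumI) (use a in auto)
  moreover have "\<And>x. (\<Sum>a\<in>A. (r * c a) * monom n (e a) x) = r * f x"
    using a by (simp add: sum_distrib_left mult.assoc)
  ultimately show ?thesis by simp
qed

lemma hp_neg: "hp n k f \<Longrightarrow> hp n k (\<lambda>x. - f x)"
  using hp_cmult[of n k f "-1"] by simp

lemma hp_diff: "hp n k f \<Longrightarrow> hp n k g \<Longrightarrow> hp n k (\<lambda>x. f x - g x)"
  using hp_add[of n k f "\<lambda>x. - g x"] hp_neg[of n k g] by simp

lemma monom_add: "monom n (\<lambda>j. \<alpha> j + \<beta> j) x = monom n \<alpha> x * monom n \<beta> x"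
  unfolding monom_def by (simp add: power_add prod.distrib)

lemma hp_mult:
  assumes "hp n j f" "hp n k g"
  shows "hp n (j+k) (\<lambda>x. f x * g x)"
proof -
  obtain A :: "nat set" and c e where a: "finite A" "\<forall>a\<in>A. deg n (e a) = j" "\<forall>x. f x = (\<Sum>a\<in>A. c a * monom n (e a) x)"
    using assms(1) unfolding hp_def by blast
  obtain B :: "nat set" and d e2 where b: "finite B" "\<forall>a\<in>B. deg n (e2 a) = k" "\<forall>x. g x = (\<Sum>a\<in>B. d a * monom n (e2 a) x)"
    using assms(2) unfolding hp_def by blast
  have "hp n (j+k) (\<lambda>x. \<Sum>p\<in>A \<times> B. (c (fst p) * d (snd p)) * monom n (\<lambda>i. e (fst p) i + e2 (snd p) i) x)"
    by (rule hp_sumI) (use a b in \<open>auto simp: deg_def sum.distrib\<close>)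
  moreover have "\<And>x. (\<Sum>p\<in>A \<times> B. (c (fst p) * d (snd p)) * monom n (\<lambda>i. e (fst p) i + e2 (snd p) i) x) = f x * g x"
  proof -
    fix x
    have "f x * g x = (\<Sum>a\<in>A. \<Sum>b\<in>B. (c a * monom n (e a) x) * (d b * monom n (e2 b) x))"
      using a b by (simp add: sum_product)
    also have "\<dots> = (\<Sum>p\<in>A \<times> B. (c (fst p) * monom n (e (fst p)) x) * (d (snd p) * monom n (e2 (snd p)) x))"
      by (simp add: sum.cartesian_product split_def)
    also have "\<dots> = (\<Sum>p\<in>A \<times> B. (c (fst p) * d (snd p)) * monom n (\<lambda>i. e (fst p) i + e2 (snd p) i) x)"
      by (simp add: monom_add mult_ac)
    finally show "(\<Sum>p\<in>A \<times> B. (c (fst p) * d (snd p)) * monom n (\<lambda>i. e (fst p) i + e2 (snd p) i) x) = f x * g x" by simp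
  qed
  ultimately show ?thesis by simp
qed

lemma hp_sum:
  assumes "finite S" "\<And>i. i \<in> S \<Longrightarrow> hp n k (f i)"
  shows "hp n k (\<lambda>x. \<Sum>i\<in>S. f i x)"
  using assms
proof (induction S rule: finite_induct)
  case empty
  then show ?case by (simp add: hp_zero)
next
  case (insert a F)
  then show ?case using hp_add[of n k "f a" "\<lambda>x. \<Sum>i\<in>F. f i x"] by simp
qed

lemma hp_const: "hp n 0 (\<lambda>x. r)"
proof -
  have "hp n 0 (\<lambda>x. \<Sum>a\<in>{0::nat}. r * monom n (\<lambda>j. 0) x)"
    by (rule hp_sumI) (auto simp: deg_def)
  then show ?thesis by (simp add: monom_def)
qed

lemma hp_coord:
  assumes "a \<in> {1..n}"
  shows "hp n 1 (\<lambda>x. x a)"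
proof -
  have "hp n 1 (\<lambda>x. \<Sum>b\<in>{0::nat}. 1 * monom n (\<lambda>j. if j = a then 1 else 0) x)"
    by (rule hp_sumI) (use assms in \<open>auto simp: deg_def\<close>)
  moreover have "\<And>x. monom n (\<lambda>j. if j = a then 1 else 0) x = x a"
    using monom_split[OF assms, of "\<lambda>j. if j = a then 1 else 0"] by simp
  ultimately show ?thesis by simp
qed

lemma deg_dmon:
  assumes "i \<in> {1..n}" "\<alpha> i > 0"
  shows "deg n (dmon i \<alpha>) = deg n \<alpha> - 1"
proof -
  have "deg n \<alpha> = \<alpha> i + (\<Sum>j\<in>{1..n}-{i}. \<alpha> j)"
    unfolding deg_def using sum.remove[OF _ assms(1)] by simp
  moreover have "deg n (dmon i \<alpha>) = (\<alpha> i - 1) + (\<Sum>j\<in>{1..n}-{i}. \<alpha> j)"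
  proof -
    have "deg n (dmon i \<alpha>) = dmon i \<alpha> i + (\<Sum>j\<in>{1..n}-{i}. dmon i \<alpha> j)"
      unfolding deg_def using sum.remove[OF _ assms(1)] by simp
    moreover have "(\<Sum>j\<in>{1..n}-{i}. dmon i \<alpha> j) = (\<Sum>j\<in>{1..n}-{i}. \<alpha> j)"
      by (rule sum.cong) (auto simp: dmon_def)
    ultimately show ?thesis by (simp add: dmon_def)
  qed
  ultimately show ?thesis using assms(2) by simp
qed

lemma hp_pd:
  assumes "hp n k f"
  shows "hp n (k-1) (pd i f)"
proof -
  obtain A :: "nat set" and c e where a: "finite A" "\<forall>a\<in>A. deg n (e a) = k" "\<forall>x. f x = (\<Sum>a\<in>A. c a * monom n (e a) x)"
    using assms(1) unfolding hp_def by blast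
  show ?thesis
  proof (cases "i \<in> {1..n}")
    case True
    have "hp n (k-1) (\<lambda>x. \<Sum>a\<in>{a\<in>A. e a i > 0}. (c a * real (e a i)) * monom n (dmon i (e a)) x)"
      by (rule hp_sumI) (use a True deg_dmon in auto)
    moreover have "\<And>x. (\<Sum>a\<in>{a\<in>A. e a i > 0}. (c a * real (e a i)) * monom n (dmon i (e a)) x) = pd i f x"
    proof -
      fix x
      have "pd i f x = (\<Sum>a\<in>A. c a * (real (e a i) * monom n (dmon i (e a)) x))"
        by (rule rep_pd[OF a(1) a(3) True])
      also have "\<dots> = (\<Sum>a\<in>A. (c a * real (e a i)) * monom n (dmon i (e a)) x)"
        by (simp add: mult_ac)
      also have "\<dots> = (\<Sum>a\<in>{a\<in>A. e a i > 0}. (c a * real (e a i)) * monom n (dmon i (e a)) x)"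
        by (rule sum.mono_neutral_right) (use a in auto)
      finally show "(\<Sum>a\<in>{a\<in>A. e a i > 0}. (c a * real (e a i)) * monom n (dmon i (e a)) x) = pd i f x" by simp
    qed
    ultimately show ?thesis by simp
  next
    case False
    have "pd i f = (\<lambda>x. 0)" using rep_pd_out[OF a(3) False] by auto
    then show ?thesis by (simp add: hp_zero)
  qed
qed

lemma hp0_pd:
  assumes "hp n 0 f"
  shows "pd i f x = 0"
proof -
  obtain A :: "nat set" and c e where a: "finite A" "\<forall>a\<in>A. deg n (e a) = 0" "\<forall>x. f x = (\<Sum>a\<in>A. c a * monom n (e a) x)"
    using assms(1) unfolding hp_def by blast
  show ?thesis
  proof (cases "i \<in> {1..n}")
    case True
    have "\<forall>a\<in>A. e a i = 0" using a(2) True unfolding deg_def by auto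
    then show ?thesis using rep_pd[OF a(1) a(3) True] by simp
  next
    case False
    then show ?thesis using rep_pd_out[OF a(3) False] by simp
  qed
qed

lemma hp1_pdpd: "hp n 1 f \<Longrightarrow> pd i (pd j f) x = 0"
  using hp0_pd hp_pd[of n 1 f j] by simp

lemma isp_pd:
  assumes "isp n f"
  shows "isp n (pd i f)"
proof -
  obtain A :: "nat set" and c e where a: "finite A" "\<forall>x. f x = (\<Sum>a\<in>A. c a * monom n (e a) x)"
    using assms(1) unfolding isp_def by blast
  show ?thesis
  proof (cases "i \<in> {1..n}")
    case True
    have "isp n (\<lambda>x. \<Sum>a\<in>A. (c a * real (e a i)) * monom n (dmon i (e a)) x)"
      by (rule isp_sumI) (use a in auto)
    moreover have "pd i f = (\<lambda>x. \<Sum>a\<in>A. (c a * real (e a i)) * monom n (dmon i (e a)) x)"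
      by (rule ext, simp add: rep_pd[OF a(1) a(2) True] mult_ac)
    ultimately show ?thesis by simp
  next
    case False
    have "pd i f = (\<lambda>x. 0)" using rep_pd_out[OF a(2) False] by auto
    then show ?thesis using hp_isp[OF hp_zero] by simp
  qed
qed

lemma schwarz:
  assumes "isp n f"
  shows "pd i (pd j f) x = pd j (pd i f) x"
proof -
  obtain A :: "nat set" and c e where a: "finite A" "\<forall>x. f x = (\<Sum>a\<in>A. c a * monom n (e a) x)"
    using assms(1) unfolding isp_def by blast
  show ?thesis
  proof (cases "i \<in> {1..n} \<and> j \<in> {1..n}")
    case True
    then have ij: "i \<in> {1..n}" "j \<in> {1..n}" by auto
    have pj: "\<forall>x. pd j f x = (\<Sum>a\<in>A. (c a * real (e a j)) * monom n (dmon j (e a)) x)"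
      using rep_pd[OF a(1) a(2) ij(2)] by (simp add: mult_ac)
    have pi: "\<forall>x. pd i f x = (\<Sum>a\<in>A. (c a * real (e a i)) * monom n (dmon i (e a)) x)"
      using rep_pd[OF a(1) a(2) ij(1)] by (simp add: mult_ac)
    have "pd i (pd j f) x = (\<Sum>a\<in>A. (c a * real (e a j)) * (real (dmon j (e a) i) * monom n (dmon i (dmon j (e a))) x))"
      by (rule rep_pd[OF a(1) pj ij(1)])
    also have "\<dots> = (\<Sum>a\<in>A. (c a * real (e a i)) * (real (dmon i (e a) j) * monom n (dmon j (dmon i (e a))) x))"
    proof (rule sum.cong[OF refl])
      fix a assume "a \<in> A"
      show "(c a * real (e a j)) * (real (dmon j (e a) i) * monom n (dmon i (dmon j (e a))) x) =
            (c a * real (e a i)) * (real (dmon i (e a) j) * monom n (dmon j (dmon i (e a))) x)"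
      proof (cases "i = j")
        case True then show ?thesis by simp
      next
        case False
        then have "dmon i (dmon j (e a)) = dmon j (dmon i (e a))" "dmon j (e a) i = e a i" "dmon i (e a) j = e a j"
          unfolding dmon_def by (auto simp: fun_upd_twist)
        then show ?thesis by (simp add: mult_ac)
      qed
    qed
    also have "\<dots> = pd j (pd i f) x"
      by (rule rep_pd[OF a(1) pi ij(2), symmetric])
    finally show ?thesis .
  next
    case False
    then consider "i \<notin> {1..n}" | "j \<notin> {1..n}" by blast
    then show ?thesis
    proof cases
      assume "i \<notin> {1..n}"
      moreover obtain B :: "nat set" and d e2 where "finite B" "\<forall>x. pd j f x = (\<Sum>a\<in>B. d a * monom n (e2 a) x)"
        using isp_pd[OF assms, of j] unfolding isp_def by blast
      ultimately have "pd i (pd j f) x = 0" using rep_pd_out by blast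
      moreover have "pd j (pd i f) x = 0" using rep_pd_out[OF a(2) \<open>i \<notin> {1..n}\<close>] pd_zero_fun[of "pd i f" j x] by simp
      ultimately show ?thesis by simp
    next
      assume "j \<notin> {1..n}"
      moreover obtain B :: "nat set" and d e2 where "finite B" "\<forall>x. pd i f x = (\<Sum>a\<in>B. d a * monom n (e2 a) x)"
        using isp_pd[OF assms, of i] unfolding isp_def by blast
      ultimately have "pd j (pd i f) x = 0" using rep_pd_out by blast
      moreover have "pd i (pd j f) x = 0" using rep_pd_out[OF a(2) \<open>j \<notin> {1..n}\<close>] pd_zero_fun[of "pd j f" i x] by simp
      ultimately show ?thesis by simp
    qed
  qed
qed

lemma euler_monom:
  assumes "i \<in> {1..n}"
  shows "x i * (real (\<alpha> i) * monom n (dmon i \<alpha>) x) = real (\<alpha> i) * monom n \<alpha> x"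
proof (cases "\<alpha> i = 0")
  case True then show ?thesis by simp
next
  case False
  have "x i * x i ^ (\<alpha> i - 1) = x i ^ \<alpha> i" using False by (cases "\<alpha> i") auto
  then show ?thesis using monom_split[OF assms, of \<alpha> x] monom_dmon[OF assms, of \<alpha> x]
    by (simp add: mult_ac)
qed

lemma euler:
  assumes "hp n k f"
  shows "(\<Sum>i\<in>{1..n}. x i * pd i f x) = real k * f x"
proof -
  obtain A :: "nat set" and c e where a: "finite A" "\<forall>a\<in>A. deg n (e a) = k" "\<forall>x. f x = (\<Sum>a\<in>A. c a * monom n (e a) x)"
    using assms(1) unfolding hp_def by blast
  have "(\<Sum>i\<in>{1..n}. x i * pd i f x) = (\<Sum>i\<in>{1..n}. \<Sum>a\<in>A. c a * (x i * (real (e a i) * monom n (dmon i (e a)) x)))"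
    by (rule sum.cong[OF refl]) (simp add: rep_pd[OF a(1) a(3)] sum_distrib_left mult_ac)
  also have "\<dots> = (\<Sum>i\<in>{1..n}. \<Sum>a\<in>A. c a * (real (e a i) * monom n (e a) x))"
    by (intro sum.cong refl) (simp add: euler_monom)
  also have "\<dots> = (\<Sum>a\<in>A. c a * (real (\<Sum>i\<in>{1..n}. e a i) * monom n (e a) x))"
    by (subst sum.swap) (simp add: sum_distrib_left sum_distrib_right)
  also have "\<dots> = (\<Sum>a\<in>A. real k * (c a * monom n (e a) x))"
    using a(2) unfolding deg_def by (intro sum.cong refl) simp
  also have "\<dots> = real k * f x" using a(3) by (simp add: sum_distrib_left)
  finally show ?thesis .
qed

lemma monom_scale: "monom n \<alpha> (\<lambda>j. t * x j) = t ^ deg n \<alpha> * monom n \<alpha> x"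
  unfolding monom_def deg_def by (simp add: power_mult_distrib prod.distrib power_sum)

lemma hp_scale:
  assumes "hp n k f"
  shows "f (\<lambda>j. t * x j) = t^k * f x"
proof -
  obtain A :: "nat set" and c e where a: "finite A" "\<forall>a\<in>A. deg n (e a) = k" "\<forall>x. f x = (\<Sum>a\<in>A. c a * monom n (e a) x)"
    using assms(1) unfolding hp_def by blast
  show ?thesis using a by (simp add: monom_scale sum_distrib_left mult_ac)
qed

lemma hp_half:
  assumes "hp n k f" "\<And>x. x n \<ge> 0 \<Longrightarrow> f x = 0"
  shows "f x = 0"
proof (cases "x n \<ge> 0")
  case True then show ?thesis using assms(2) by simp
next
  case False
  have "f (\<lambda>j. (-1) * x j) = (-1)^k * f x" by (rule hp_scale[OF assms(1)])
  moreover have "f (\<lambda>j. (-1) * x j) = 0" using False assms(2) by simp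
  ultimately show ?thesis by simp
qed

definition nf :: "nat \<Rightarrow> ((nat\<Rightarrow>real)\<Rightarrow>real) \<Rightarrow> bool" where
  "nf n f \<longleftrightarrow> (\<forall>x. f (x(n:=0)) = f x)"

lemma monom_rs:
  assumes "n \<ge> 1"
  shows "monom n \<alpha> (x(n:=0)) = (if \<alpha> n = 0 then 1 else 0) * monom n \<alpha> x"
proof -
  have nn: "n \<in> {1..n}" using assms by simp
  show ?thesis using monom_line[OF nn, of \<alpha> x 0] monom_split[OF nn, of \<alpha> x] by auto
qed

lemma hp_rs:
  assumes "n \<ge> 1" "hp n k f"
  shows "hp n k (\<lambda>x. f (x(n:=0)))"
proof -
  obtain A :: "nat set" and c e where a: "finite A" "\<forall>a\<in>A. deg n (e a) = k" "\<forall>x. f x = (\<Sum>a\<in>A. c a * monom n (e a) x)"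
    using assms(2) unfolding hp_def by blast
  have "hp n k (\<lambda>x. \<Sum>a\<in>A. (c a * (if e a n = 0 then 1 else 0)) * monom n (e a) x)"
    by (rule hp_sumI) (use a in auto)
  moreover have "\<And>x. f (x(n:=0)) = (\<Sum>a\<in>A. (c a * (if e a n = 0 then 1 else 0)) * monom n (e a) x)"
    using a(3) monom_rs[OF assms(1)] by (simp add: mult_ac)
  ultimately show ?thesis by simp
qed

lemma pd_rs:
  assumes "i \<noteq> n"
  shows "pd i (\<lambda>x. f (x(n:=0))) x = pd i f (x(n:=0))"
proof -
  have "(\<lambda>t. f ((x(i:=t))(n:=0))) = (\<lambda>t. f ((x(n:=0))(i:=t)))"
    using assms by (simp add: fun_upd_twist)
  then show ?thesis unfolding pd_def using assms by simp
qed

lemma nf_rs: "nf n (\<lambda>x. f (x(n:=0)))"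
  unfolding nf_def by simp

lemma nf_pd_n:
  assumes "nf n f"
  shows "pd n f x = 0"
proof -
  have "(\<lambda>t. f (x(n:=t))) = (\<lambda>t. f (x(n:=0)))"
    using assms unfolding nf_def by (metis fun_upd_upd)
  then show ?thesis unfolding pd_def by (simp add: DERIV_imp_deriv[OF DERIV_const])
qed

lemma nf_pd:
  assumes "nf n f"
  shows "nf n (pd i f)"
proof (cases "i = n")
  case True
  then show ?thesis using nf_pd_n[OF assms] unfolding nf_def by simp
next
  case False
  have "f = (\<lambda>x. f (x(n:=0)))" using assms unfolding nf_def by auto
  then have "\<And>x. pd i f x = pd i f (x(n:=0))" using pd_rs[OF False, of f] by metis
  then show ?thesis unfolding nf_def by simp
qed

lemma euler_T:
  assumes "n \<ge> 1" "hp n k f" "nf n f"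
  shows "(\<Sum>i\<in>{1..n-1}. x i * pd i f x) = real k * f x"
proof -
  have "{1..n} = insert n {1..n-1}" using assms(1) by auto
  moreover have "n \<notin> {1..n-1}" by auto
  ultimately have "(\<Sum>i\<in>{1..n}. x i * pd i f x) = x n * pd n f x + (\<Sum>i\<in>{1..n-1}. x i * pd i f x)"
    using sum.insert[of "{1..n-1}" n "\<lambda>i. x i * pd i f x"] by simp
  then show ?thesis using euler[OF assms(2), of x] nf_pd_n[OF assms(3)] by simp
qed

lemma isp_add:
  assumes "isp n f" "isp n g"
  shows "isp n (\<lambda>x. f x + g x)"
proof -
  obtain A :: "nat set" and c e where a: "finite A" "\<forall>x. f x = (\<Sum>a\<in>A. c a * monom n (e a) x)"
    using assms(1) unfolding isp_def by blast
  obtain B :: "nat set" and d e2 where b: "finite B" "\<forall>x. g x = (\<Sum>a\<in>B. d a * monom n (e2 a) x)"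
    using assms(2) unfolding isp_def by blast
  have "isp n (\<lambda>x. \<Sum>a\<in>A <+> B. case_sum c d a * monom n (case_sum e e2 a) x)"
    by (rule isp_sumI) (use a b in auto)
  moreover have "\<And>x. (\<Sum>a\<in>A <+> B. case_sum c d a * monom n (case_sum e e2 a) x) = f x + g x"
    using a b by (simp add: sum.Plus comp_def)
  ultimately show ?thesis by simp
qed

lemma isp_mult:
  assumes "isp n f" "isp n g"
  shows "isp n (\<lambda>x. f x * g x)"
proof -
  obtain A :: "nat set" and c e where a: "finite A" "\<forall>x. f x = (\<Sum>a\<in>A. c a * monom n (e a) x)"
    using assms(1) unfolding isp_def by blast
  obtain B :: "nat set" and d e2 where b: "finite B" "\<forall>x. g x = (\<Sum>a\<in>B. d a * monom n (e2 a) x)"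
    using assms(2) unfolding isp_def by blast
  have "isp n (\<lambda>x. \<Sum>p\<in>A \<times> B. (c (fst p) * d (snd p)) * monom n (\<lambda>i. e (fst p) i + e2 (snd p) i) x)"
    by (rule isp_sumI) (use a b in auto)
  moreover have "\<And>x. (\<Sum>p\<in>A \<times> B. (c (fst p) * d (snd p)) * monom n (\<lambda>i. e (fst p) i + e2 (snd p) i) x) = f x * g x"
  proof -
    fix x
    have "f x * g x = (\<Sum>a\<in>A. \<Sum>b\<in>B. (c a * monom n (e a) x) * (d b * monom n (e2 b) x))"
      using a b by (simp add: sum_product)
    also have "\<dots> = (\<Sum>p\<in>A \<times> B. (c (fst p) * monom n (e (fst p)) x) * (d (snd p) * monom n (e2 (snd p)) x))"
      by (simp add: sum.cartesian_product split_def)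
    also have "\<dots> = (\<Sum>p\<in>A \<times> B. (c (fst p) * d (snd p)) * monom n (\<lambda>i. e (fst p) i + e2 (snd p) i) x)"
      by (simp add: monom_add mult_ac)
    finally show "(\<Sum>p\<in>A \<times> B. (c (fst p) * d (snd p)) * monom n (\<lambda>i. e (fst p) i + e2 (snd p) i) x) = f x * g x" by simp
  qed
  ultimately show ?thesis by simp
qed

lemma isp_const: "isp n (\<lambda>x. r)" using hp_isp[OF hp_const] .
lemma isp_coord: "a \<in> {1..n} \<Longrightarrow> isp n (\<lambda>x. x a)" using hp_isp[OF hp_coord] .
lemma isp_cmult: "isp n f \<Longrightarrow> isp n (\<lambda>x. r * f x)" using isp_mult[OF isp_const] .
lemma isp_diff: "isp n f \<Longrightarrow> isp n g \<Longrightarrow> isp n (\<lambda>x. f x - g x)"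
  using isp_add[of n f "\<lambda>x. (-1) * g x"] isp_cmult[of n g "-1"] by simp
lemma isp_sum:
  assumes "finite S" "\<And>i. i \<in> S \<Longrightarrow> isp n (f i)"
  shows "isp n (\<lambda>x. \<Sum>i\<in>S. f i x)"
  using assms
proof (induction S rule: finite_induct)
  case empty
  then show ?case using isp_const[of n 0] by simp
next
  case (insert a F)
  then show ?case using isp_add[of n "f a" "\<lambda>x. \<Sum>i\<in>F. f i x"] by simp
qed

lemma nf_add: "nf n f \<Longrightarrow> nf n g \<Longrightarrow> nf n (\<lambda>x. f x + g x)" unfolding nf_def by simp
lemma nf_diff: "nf n f \<Longrightarrow> nf n g \<Longrightarrow> nf n (\<lambda>x. f x - g x)" unfolding nf_def by simp
lemma nf_mult: "nf n f \<Longrightarrow> nf n g \<Longrightarrow> nf n (\<lambda>x. f x * g x)" unfolding nf_def by simp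
lemma nf_cmult: "nf n f \<Longrightarrow> nf n (\<lambda>x. r * f x)" unfolding nf_def by simp
lemma nf_const: "nf n (\<lambda>x. r)" unfolding nf_def by simp
lemma nf_coord: "a \<noteq> n \<Longrightarrow> nf n (\<lambda>x. x a)" unfolding nf_def by simp
lemma nf_sum: "(\<And>i. i \<in> S \<Longrightarrow> nf n (f i)) \<Longrightarrow> nf n (\<lambda>x. \<Sum>i\<in>S. f i x)" unfolding nf_def by simp

lemma pd_cmult_fun: "isp n f \<Longrightarrow> pd i (\<lambda>x. c * f x) = (\<lambda>x. c * pd i f x)"
  by (rule ext) (rule pd_cmult)
lemma pd_add_fun: "isp n f \<Longrightarrow> isp n g \<Longrightarrow> pd i (\<lambda>x. f x + g x) = (\<lambda>x. pd i f x + pd i g x)"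
  by (rule ext) (rule pd_add)
lemma pd_diff_fun: "isp n f \<Longrightarrow> isp n g \<Longrightarrow> pd i (\<lambda>x. f x - g x) = (\<lambda>x. pd i f x - pd i g x)"
  by (rule ext) (rule pd_diff)
lemma pd_mult_fun: "isp n f \<Longrightarrow> isp n g \<Longrightarrow> pd i (\<lambda>x. f x * g x) = (\<lambda>x. pd i f x * g x + f x * pd i g x)"
  by (rule ext) (rule pd_mult)
lemma pd_sum_fun: "finite S \<Longrightarrow> (\<And>j. j \<in> S \<Longrightarrow> isp n (f j)) \<Longrightarrow> pd i (\<lambda>x. \<Sum>j\<in>S. f j x) = (\<lambda>x. \<Sum>j\<in>S. pd i (f j) x)"
  by (rule ext) (rule pd_sum)

definition ysq :: "nat \<Rightarrow> (nat\<Rightarrow>real) \<Rightarrow> real" where "ysq n x = (\<Sum>a\<in>{1..n-1}. x a * x a)"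
definition lap :: "nat \<Rightarrow> ((nat\<Rightarrow>real)\<Rightarrow>real) \<Rightarrow> (nat\<Rightarrow>real) \<Rightarrow> real" where
  "lap n f x = (\<Sum>a\<in>{1..n-1}. pd a (pd a f) x)"

lemma schwarz_fun: "isp n f \<Longrightarrow> pd i (pd j f) = pd j (pd i f)"
  using schwarz by blast

lemma kdelta_sum: "finite S \<Longrightarrow> c \<in> S \<Longrightarrow> (\<Sum>b\<in>S. kdelta c b * f b) = f c"
proof -
  assume "finite S" "c \<in> S"
  have "(\<Sum>b\<in>S. kdelta c b * f b) = (\<Sum>b\<in>S. if c = b then f b else 0)"
    by (rule sum.cong) (auto simp: kdelta_def)
  then show ?thesis using \<open>finite S\<close> \<open>c \<in> S\<close> by simp
qed

lemma kdelta_sum': "finite S \<Longrightarrow> c \<in> S \<Longrightarrow> (\<Sum>b\<in>S. kdelta b c * f b) = f c"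
proof -
  assume "finite S" "c \<in> S"
  have "(\<Sum>b\<in>S. kdelta b c * f b) = (\<Sum>b\<in>S. if b = c then f b else 0)"
    by (rule sum.cong) (auto simp: kdelta_def)
  then show ?thesis using \<open>finite S\<close> \<open>c \<in> S\<close> by simp
qed

lemma pd_coord_mult:
  assumes "isp n f" "b \<in> {1..n}"
  shows "pd c (\<lambda>x. x b * f x) x = kdelta c b * f x + x b * pd c f x"
  using pd_mult[OF isp_coord[OF assms(2)] assms(1), of c x] pd_coord by simp

lemma pd_coord_mult_sum:
  assumes "\<And>b. b \<in> {1..n-1} \<Longrightarrow> isp n (f b)" "c \<in> {1..n-1}"
  shows "pd c (\<lambda>x. \<Sum>b\<in>{1..n-1}. x b * f b x) x = f c x + (\<Sum>b\<in>{1..n-1}. x b * pd c (f b) x)"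
proof -
  have i: "\<And>b. b \<in> {1..n-1} \<Longrightarrow> isp n (\<lambda>x. x b * f b x)"
  proof -
    fix b assume b: "b \<in> {1..n-1}"
    then have "b \<in> {1..n}" by auto
    then show "isp n (\<lambda>x. x b * f b x)" using isp_mult[OF isp_coord assms(1)[OF b]] by blast
  qed
  have "pd c (\<lambda>x. \<Sum>b\<in>{1..n-1}. x b * f b x) x = (\<Sum>b\<in>{1..n-1}. pd c (\<lambda>x. x b * f b x) x)"
    by (rule pd_sum) (auto intro: i)
  also have "\<dots> = (\<Sum>b\<in>{1..n-1}. kdelta c b * f b x + x b * pd c (f b) x)"
    by (rule sum.cong[OF refl]) (rule pd_coord_mult, auto intro: assms(1))
  also have "\<dots> = f c x + (\<Sum>b\<in>{1..n-1}. x b * pd c (f b) x)"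
    by (simp only: sum.distrib kdelta_sum[OF finite_atLeastAtMost assms(2)])
  finally show ?thesis .
qed

lemma isp_ysq: "isp n (ysq n)"
proof -
  have "isp n (\<lambda>x. \<Sum>a\<in>{1..n-1}. x a * x a)" by (rule isp_sum) (auto intro!: isp_mult isp_coord)
  then show ?thesis unfolding ysq_def[abs_def] .
qed

lemma hp_ysq: "hp n 2 (ysq n)"
proof -
  have "\<And>a. a \<in> {1..n-1} \<Longrightarrow> hp n (1+1) (\<lambda>x. x a * x a)"
  proof -
    fix a assume "a \<in> {1..n-1}"
    then have "a \<in> {1..n}" by auto
    then show "hp n (1+1) (\<lambda>x. x a * x a)" using hp_mult[OF hp_coord hp_coord] by blast
  qed
  then have "hp n (1+1) (\<lambda>x. \<Sum>a\<in>{1..n-1}. x a * x a)" by (intro hp_sum) auto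
  then show ?thesis unfolding ysq_def[abs_def] one_add_one .
qed

lemma nf_ysq: "nf n (ysq n)"
  unfolding ysq_def[abs_def] by (rule nf_sum) (auto intro!: nf_mult nf_coord)

lemma pd_ysq: "c \<in> {1..n-1} \<Longrightarrow> pd c (ysq n) x = 2 * x c"
proof -
  assume c: "c \<in> {1..n-1}"
  have "pd c (ysq n) x = pd c (\<lambda>x. \<Sum>b\<in>{1..n-1}. x b * x b) x" unfolding ysq_def[abs_def] by simp
  also have "\<dots> = x c + (\<Sum>b\<in>{1..n-1}. x b * pd c (\<lambda>x. x b) x)"
    by (rule pd_coord_mult_sum[OF _ c]) (auto intro: isp_coord)
  also have "\<dots> = 2 * x c" using c by (simp add: pd_coord mult.commute[of _ "kdelta _ _"] kdelta_sum)
  finally show ?thesis .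
qed

lemma isp_lap: "isp n f \<Longrightarrow> isp n (lap n f)"
  unfolding lap_def[abs_def] by (intro isp_sum isp_pd) auto

lemma hp_lap: "hp n j f \<Longrightarrow> hp n (j-2) (lap n f)"
proof -
  assume h: "hp n j f"
  have "\<And>a. hp n (j-1-1) (pd a (pd a f))" by (rule hp_pd[OF hp_pd[OF h]])
  moreover have "j - 1 - 1 = j - 2" by simp
  ultimately have "\<And>a. hp n (j-2) (pd a (pd a f))" by simp
  then show ?thesis unfolding lap_def[abs_def] by (intro hp_sum) auto
qed

lemma nf_lap: "nf n f \<Longrightarrow> nf n (lap n f)"
  unfolding lap_def[abs_def] by (intro nf_sum nf_pd)

lemma lap_ysq:
  assumes "n \<ge> 1" "hp n j g" "nf n g"
  shows "lap n (\<lambda>x. ysq n x * g x) x = ysq n x * lap n g x + (4 * real j + 2 * (real n - 1)) * g x"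
proof -
  have ig: "isp n g" using hp_isp[OF assms(2)] .
  have p1: "\<And>a. a \<in> {1..n-1} \<Longrightarrow> pd a (\<lambda>x. ysq n x * g x) = (\<lambda>x. 2 * (x a * g x) + ysq n x * pd a g x)"
  proof (rule ext)
    fix a x assume a: "a \<in> {1..n-1}"
    have "pd a (\<lambda>x. ysq n x * g x) x = pd a (ysq n) x * g x + ysq n x * pd a g x"
      by (rule pd_mult[OF isp_ysq ig])
    then show "pd a (\<lambda>x. ysq n x * g x) x = 2 * (x a * g x) + ysq n x * pd a g x"
      using pd_ysq[OF a] by simp
  qed
  have p2: "\<And>a. a \<in> {1..n-1} \<Longrightarrow> pd a (pd a (\<lambda>x. ysq n x * g x)) x = 2 * (g x + x a * pd a g x) + (2 * x a * pd a g x + ysq n x * pd a (pd a g) x)"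
  proof -
    fix a assume a: "a \<in> {1..n-1}"
    then have a': "a \<in> {1..n}" by auto
    have "pd a (pd a (\<lambda>x. ysq n x * g x)) x = pd a (\<lambda>x. 2 * (x a * g x) + ysq n x * pd a g x) x"
      using p1[OF a] by simp
    also have "\<dots> = 2 * pd a (\<lambda>x. x a * g x) x + pd a (\<lambda>x. ysq n x * pd a g x) x"
      by (simp add: pd_add[of n] pd_cmult[of n] isp_cmult isp_mult isp_coord[OF a'] ig isp_ysq isp_pd)
    also have "\<dots> = 2 * (g x + x a * pd a g x) + (2 * x a * pd a g x + ysq n x * pd a (pd a g) x)"
      by (simp add: pd_coord_mult[OF ig a'] kdelta_def pd_mult[OF isp_ysq isp_pd[OF ig]] pd_ysq[OF a])
    finally show "pd a (pd a (\<lambda>x. ysq n x * g x)) x = 2 * (g x + x a * pd a g x) + (2 * x a * pd a g x + ysq n x * pd a (pd a g) x)" .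
  qed
  have "lap n (\<lambda>x. ysq n x * g x) x = (\<Sum>a\<in>{1..n-1}. 2 * g x + 4 * (x a * pd a g x) + ysq n x * pd a (pd a g) x)"
    unfolding lap_def by (rule sum.cong[OF refl]) (simp add: p2)
  also have "\<dots> = 2 * real (n-1) * g x + 4 * (\<Sum>a\<in>{1..n-1}. x a * pd a g x) + ysq n x * lap n g x"
    by (simp add: sum.distrib sum_distrib_left lap_def)
  also have "\<dots> = ysq n x * lap n g x + (4 * real j + 2 * (real n - 1)) * g x"
    using euler_T[OF assms] assms(1) by (simp add: algebra_simps of_nat_diff)
  finally show ?thesis .
qed

lemma iter_lemma:
  assumes "n \<ge> 6"
  shows "\<forall>p \<mu>. hp n j p \<longrightarrow> nf n p \<longrightarrow> (\<mu> < 0 \<or> \<mu> > real j * (real j + real n - 3)) \<longrightarrow>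
           (\<forall>x. \<mu> * p x = ysq n x * lap n p x) \<longrightarrow> (\<forall>x. p x = 0)"
proof (induction j rule: less_induct)
  case (less j)
  show ?case
  proof (intro allI impI)
    fix p \<mu> x
    assume hpj: "hp n j p" and nfp: "nf n p" and mu: "\<mu> < 0 \<or> \<mu> > real j * (real j + real n - 3)"
       and eq: "\<forall>x. \<mu> * p x = ysq n x * lap n p x"
    have "real j * (real j + real n - 3) \<ge> 0" using assms by (intro mult_nonneg_nonneg) auto
    then have mu0: "\<mu> \<noteq> 0" using mu by auto
    have G0: "\<forall>x. lap n p x = 0"
    proof (cases "j < 2")
      case True
      show ?thesis
      proof
        fix x
        have "\<And>a. pd a (pd a p) x = 0"
        proof -
          fix a
          show "pd a (pd a p) x = 0"
          proof (cases "j = 0")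
            case True
            then have "hp n 0 p" using hpj by simp
            then have "\<And>y. pd a p y = 0" using hp0_pd by blast
            then show ?thesis by (rule pd_zero_fun)
          next
            case False
            then have "hp n 1 p" using hpj True by (cases j) auto
            then show ?thesis by (rule hp1_pdpd)
          qed
        qed
        then show "lap n p x = 0" unfolding lap_def by simp
      qed
    next
      case False
      let ?G = "lap n p"
      have hG: "hp n (j-2) ?G" by (rule hp_lap[OF hpj])
      have nG: "nf n ?G" by (rule nf_lap[OF nfp])
      have "\<And>x. (\<mu> - 4 * real (j-2) - 2 * (real n - 1)) * ?G x = ysq n x * lap n ?G x"
      proof -
        fix x
        have fe: "(\<lambda>x. \<mu> * p x) = (\<lambda>x. ysq n x * ?G x)" using eq by auto
        have "\<mu> * ?G x = lap n (\<lambda>x. \<mu> * p x) x"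
          unfolding lap_def using hp_isp[OF hpj]
          by (simp add: pd_cmult_fun[of n] pd_cmult[of n] isp_pd sum_distrib_left)
        also have "\<dots> = lap n (\<lambda>x. ysq n x * ?G x) x" using fe by simp
        also have "\<dots> = ysq n x * lap n ?G x + (4 * real (j-2) + 2 * (real n - 1)) * ?G x"
          by (rule lap_ysq[OF _ hG nG]) (use assms in simp)
        finally show "(\<mu> - 4 * real (j-2) - 2 * (real n - 1)) * ?G x = ysq n x * lap n ?G x"
          by (simp add: algebra_simps)
      qed
      moreover have "(\<mu> - 4 * real (j-2) - 2 * (real n - 1)) < 0 \<or>
          (\<mu> - 4 * real (j-2) - 2 * (real n - 1)) > real (j-2) * (real (j-2) + real n - 3)"
      proof -
        have jj: "real (j-2) = real j - 2" using False by (simp add: of_nat_diff)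
        from mu show ?thesis
        proof
          assume "\<mu> < 0" then show ?thesis using assms unfolding jj by simp
        next
          assume "\<mu> > real j * (real j + real n - 3)"
          then show ?thesis unfolding jj by (simp add: algebra_simps)
        qed
      qed
      ultimately show ?thesis using less.IH[of "j-2"] False hG nG by auto
    qed
    show "p x = 0" using eq G0 mu0 by simp
  qed
qed

definition TT :: "nat \<Rightarrow> nat set" where "TT n = {1..n-1}"
lemma finTT[simp]: "finite (TT n)" by (simp add: TT_def)
lemma TT1: "a \<in> TT n \<Longrightarrow> a \<in> {1..n}" by (auto simp: TT_def)
lemma TTn: "a \<in> TT n \<Longrightarrow> a \<noteq> n" by (auto simp: TT_def)
lemma ysq_TT: "ysq n x = (\<Sum>a\<in>TT n. x a * x a)" by (simp add: ysq_def TT_def)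
lemma lap_TT: "lap n f x = (\<Sum>a\<in>TT n. pd a (pd a f) x)" by (simp add: lap_def TT_def)
lemma euler_TT: "n \<ge> 1 \<Longrightarrow> hp n k f \<Longrightarrow> nf n f \<Longrightarrow> (\<Sum>i\<in>TT n. x i * pd i f x) = real k * f x"
  unfolding TT_def by (rule euler_T)
lemma pd_coord_mult_sum_TT:
  "(\<And>b. b \<in> TT n \<Longrightarrow> isp n (f b)) \<Longrightarrow> c \<in> TT n \<Longrightarrow>
   pd c (\<lambda>x. \<Sum>b\<in>TT n. x b * f b x) x = f c x + (\<Sum>b\<in>TT n. x b * pd c (f b) x)"
  unfolding TT_def by (rule pd_coord_mult_sum)
lemma pd_ysq_TT: "c \<in> TT n \<Longrightarrow> pd c (ysq n) x = 2 * x c"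
  unfolding TT_def by (rule pd_ysq)

definition Dg :: "nat \<Rightarrow> (nat \<Rightarrow> nat \<Rightarrow> (nat\<Rightarrow>real) \<Rightarrow> real) \<Rightarrow> nat \<Rightarrow> (nat\<Rightarrow>real) \<Rightarrow> real" where
  "Dg n g c x = (\<Sum>b\<in>TT n. pd b (g b c) x)"
definition Sg :: "nat \<Rightarrow> (nat \<Rightarrow> nat \<Rightarrow> (nat\<Rightarrow>real) \<Rightarrow> real) \<Rightarrow> (nat\<Rightarrow>real) \<Rightarrow> real" where
  "Sg n g x = (\<Sum>c\<in>TT n. \<Sum>d\<in>TT n. pd c (pd d (g c d)) x)"
definition Lg :: "nat \<Rightarrow> (nat \<Rightarrow> nat \<Rightarrow> (nat\<Rightarrow>real) \<Rightarrow> real) \<Rightarrow> nat \<Rightarrow> nat \<Rightarrow> (nat\<Rightarrow>real) \<Rightarrow> real" where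
  "Lg n g a c x = (\<Sum>b\<in>TT n. pd a (pd b (g b c)) x) + (\<Sum>b\<in>TT n. pd b (pd c (g a b)) x)
                 - (\<Sum>b\<in>TT n. pd b (pd b (g a c)) x)"
definition Ag :: "nat \<Rightarrow> (nat \<Rightarrow> nat \<Rightarrow> (nat\<Rightarrow>real) \<Rightarrow> real) \<Rightarrow> nat \<Rightarrow> nat \<Rightarrow> (nat\<Rightarrow>real) \<Rightarrow> real" where
  "Ag n g a c x = ((real n - 2) * Lg n g a c x - Sg n g x * kdelta a c) / (real n - 3)"
definition Rg :: "nat \<Rightarrow> (nat \<Rightarrow> nat \<Rightarrow> (nat\<Rightarrow>real) \<Rightarrow> real) \<Rightarrow> nat \<Rightarrow> nat \<Rightarrow> nat \<Rightarrow> nat \<Rightarrow> (nat\<Rightarrow>real) \<Rightarrow> real" where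
  "Rg n g a b c d x = pd a (pd c (g b d)) x - pd a (pd d (g b c)) x - pd b (pd c (g a d)) x + pd b (pd d (g a c)) x"

lemma gen_mul: fixes K G B p q :: real
  assumes "p \<noteq> 0" "q \<noteq> 0" "K*G + (B/q)/p = 0" shows "K*G*p*q + B = 0"
proof -
  have "(K*G + (B/q)/p) * (p*q) = K*G*p*q + B" using assms(1,2) by (simp add: field_simps)
  then show ?thesis using assms(3) by simp
qed
lemma alg1:
  fixes K G kd S Y xa xc p q k Dc Da L :: real
  assumes p: "p \<noteq> 0" and q: "q \<noteq> 0"
    and h: "K*G + (kd*(-S*Y/q) - xa*((p*k*Dc - S*xc)/q) - xc*((p*k*Da - S*xa)/q) + Y*((p*L - S*kd)/q))/p = 0"
  shows "K*p*q*G - 2*S*Y*kd + 2*S*(xa*xc) - p*k*(xa*Dc + xc*Da) + p*(Y*L) = 0"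
proof -
  have "(kd*(-S*Y/q) - xa*((p*k*Dc - S*xc)/q) - xc*((p*k*Da - S*xa)/q) + Y*((p*L - S*kd)/q))
      = (kd*(-S*Y) - xa*(p*k*Dc - S*xc) - xc*(p*k*Da - S*xa) + Y*(p*L - S*kd))/q"
    using q by (simp add: field_simps)
  then have "K*G + ((kd*(-S*Y) - xa*(p*k*Dc - S*xc) - xc*(p*k*Da - S*xa) + Y*(p*L - S*kd))/q)/p = 0"
    using h by simp
  then have "K*G*p*q + (kd*(-S*Y) - xa*(p*k*Dc - S*xc) - xc*(p*k*Da - S*xa) + Y*(p*L - S*kd)) = 0"
    by (rule gen_mul[OF p q])
  then show ?thesis by (simp add: algebra_simps)
qed

locale gw =
  fixes n k :: nat and g :: "nat \<Rightarrow> nat \<Rightarrow> (nat\<Rightarrow>real) \<Rightarrow> real"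
  assumes n6: "n \<ge> 6" and k2: "k \<ge> 2"
    and g_hp: "\<And>a c. hp n k (g a c)"
    and g_nf: "\<And>a c. nf n (g a c)"
    and g_sym: "\<And>a c. a \<in> TT n \<Longrightarrow> c \<in> TT n \<Longrightarrow> g a c = g c a"
    and g_tr: "\<And>x. (\<Sum>a\<in>TT n. g a a x) = 0"
    and g_rad: "\<And>a x. a \<in> TT n \<Longrightarrow> (\<Sum>b\<in>TT n. x b * g b a x) = 0"
    and g_weyl: "\<And>a b c d x. a \<in> TT n \<Longrightarrow> b \<in> TT n \<Longrightarrow> c \<in> TT n \<Longrightarrow> d \<in> TT n \<Longrightarrow>
        Rg n g a b c d x + (Ag n g b d x * kdelta a c - Ag n g b c x * kdelta a d
           - Ag n g a d x * kdelta b c + Ag n g a c x * kdelta b d) / (real n - 2) = 0"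
begin

abbreviation "T \<equiv> TT n"

lemma finT: "finite T" by simp

lemma ig: "isp n (g a c)" using hp_isp[OF g_hp] .
lemma ig1: "isp n (pd i (g a c))" using isp_pd[OF ig] .
lemma ig2: "isp n (pd i (pd j (g a c)))" using isp_pd[OF ig1] .
lemma ig3: "isp n (pd i (pd j (pd l (g a c))))" using isp_pd[OF ig2] .
lemma hg1: "hp n (k-1) (pd i (g a c))" using hp_pd[OF g_hp] .
lemma hg2: "hp n (k-2) (pd i (pd j (g a c)))" using hp_pd[OF hg1, of i] by (metis diff_diff_left one_add_one)
lemma ng1: "nf n (pd i (g a c))" using nf_pd[OF g_nf] .
lemma ng2: "nf n (pd i (pd j (g a c)))" using nf_pd[OF ng1] .

lemma eul0: "(\<Sum>b\<in>T. x b * pd b (g a c) x) = real k * g a c x"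
  using euler_TT[OF _ g_hp g_nf] n6 by simp
lemma eul1: "(\<Sum>b\<in>T. x b * pd b (pd i (g a c)) x) = (real k - 1) * pd i (g a c) x"
  using euler_TT[OF _ hg1 ng1] n6 k2 by (simp add: of_nat_diff)

lemma isp_D: "isp n (Dg n g c)"
  unfolding Dg_def[abs_def] by (intro isp_sum ig1) simp
lemma hp_D: "hp n (k-1) (Dg n g c)"
  unfolding Dg_def[abs_def] by (intro hp_sum hg1) simp
lemma nf_D: "nf n (Dg n g c)"
  unfolding Dg_def[abs_def] by (intro nf_sum ng1)
lemma isp_S: "isp n (Sg n g)"
  unfolding Sg_def[abs_def] by (intro isp_sum ig2) simp_all
lemma hp_S: "hp n (k-2) (Sg n g)"
  unfolding Sg_def[abs_def] by (intro hp_sum hg2) simp_all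
lemma nf_S: "nf n (Sg n g)"
  unfolding Sg_def[abs_def] by (intro nf_sum ng2)
lemma isp_L: "isp n (Lg n g a c)"
  unfolding Lg_def[abs_def] by (intro isp_sum isp_add isp_diff ig2) simp_all

lemma eulD: "(\<Sum>b\<in>T. x b * pd b (Dg n g c) x) = (real k - 1) * Dg n g c x"
  using euler_TT[OF _ hp_D nf_D] n6 k2 by (simp add: of_nat_diff)
lemma eulS: "(\<Sum>b\<in>T. x b * pd b (Sg n g) x) = (real k - 2) * Sg n g x"
  using euler_TT[OF _ hp_S nf_S] n6 k2 by (simp add: of_nat_diff)

lemma sym_x: "a \<in> T \<Longrightarrow> c \<in> T \<Longrightarrow> g a c x = g c a x" using g_sym by metis

lemma r1: assumes "e \<in> T" "f \<in> T"
  shows "(\<Sum>b\<in>T. x b * pd e (g b f) x) = - g e f x"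
proof -
  have "pd e (\<lambda>x. \<Sum>b\<in>T. x b * g b f x) x = 0" by (rule pd_zero_fun) (rule g_rad[OF assms(2)])
  moreover have "pd e (\<lambda>x. \<Sum>b\<in>T. x b * g b f x) x = g e f x + (\<Sum>b\<in>T. x b * pd e (g b f) x)"
    by (rule pd_coord_mult_sum_TT[OF ig assms(1)])
  ultimately show ?thesis by simp
qed

lemma r2: assumes "d \<in> T" "e \<in> T" "f \<in> T"
  shows "(\<Sum>b\<in>T. x b * pd d (pd e (g b f)) x) = - pd d (g e f) x - pd e (g d f) x"
proof -
  have z: "\<And>x. (\<Sum>b\<in>T. x b * pd e (g b f) x) + g e f x = 0" using r1[OF assms(2,3)] by simp
  have "pd d (\<lambda>x. (\<Sum>b\<in>T. x b * pd e (g b f) x) + g e f x) x = 0" by (rule pd_zero_fun) (rule z)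
  moreover have "pd d (\<lambda>x. (\<Sum>b\<in>T. x b * pd e (g b f) x) + g e f x) x
       = pd d (\<lambda>x. \<Sum>b\<in>T. x b * pd e (g b f) x) x + pd d (g e f) x"
    by (rule pd_add[of n]) (auto intro!: isp_sum isp_mult isp_coord ig1 ig TT1)
  moreover have "pd d (\<lambda>x. \<Sum>b\<in>T. x b * pd e (g b f) x) x = pd e (g d f) x + (\<Sum>b\<in>T. x b * pd d (pd e (g b f)) x)"
    by (rule pd_coord_mult_sum_TT[OF ig1 assms(1)])
  ultimately show ?thesis by simp
qed

lemma tr_pd: "(\<Sum>b\<in>T. pd c (g b b) x) = 0"
proof -
  have "pd c (\<lambda>x. \<Sum>b\<in>T. g b b x) x = (\<Sum>b\<in>T. pd c (g b b) x)" by (rule pd_sum) (auto intro: ig)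
  moreover have "pd c (\<lambda>x. \<Sum>b\<in>T. g b b x) x = 0" by (rule pd_zero_fun) (rule g_tr)
  ultimately show ?thesis by simp
qed

lemma yD: "(\<Sum>c\<in>T. x c * Dg n g c x) = 0"
proof -
  have "(\<Sum>c\<in>T. x c * Dg n g c x) = (\<Sum>b\<in>T. \<Sum>c\<in>T. x c * pd b (g c b) x)"
    unfolding Dg_def sum_distrib_left
    by (subst sum.swap) (intro sum.cong refl, simp add: g_sym)
  also have "\<dots> = (\<Sum>b\<in>T. - g b b x)" by (intro sum.cong refl r1) auto
  also have "\<dots> = 0" using g_tr by (simp add: sum_negf)
  finally show ?thesis .
qed


lemma sf: "a \<in> T \<Longrightarrow> c \<in> T \<Longrightarrow> g a c = g c a" by (rule g_sym)

lemma Ly: assumes c: "c \<in> T"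
  shows "(\<Sum>a\<in>T. x a * Lg n g a c x) = real k * Dg n g c x"
proof -
  have s1: "(\<Sum>a\<in>T. x a * (\<Sum>b\<in>T. pd a (pd b (g b c)) x)) = (real k - 1) * Dg n g c x"
  proof -
    have "(\<Sum>a\<in>T. x a * (\<Sum>b\<in>T. pd a (pd b (g b c)) x)) = (\<Sum>b\<in>T. \<Sum>a\<in>T. x a * pd a (pd b (g b c)) x)"
      unfolding sum_distrib_left by (rule sum.swap)
    also have "\<dots> = (\<Sum>b\<in>T. (real k - 1) * pd b (g b c) x)" by (intro sum.cong refl eul1)
    finally show ?thesis unfolding Dg_def by (simp add: sum_distrib_left)
  qed
  have s2: "(\<Sum>a\<in>T. x a * (\<Sum>b\<in>T. pd b (pd c (g a b)) x)) = - Dg n g c x"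
  proof -
    have "(\<Sum>a\<in>T. x a * (\<Sum>b\<in>T. pd b (pd c (g a b)) x)) = (\<Sum>b\<in>T. \<Sum>a\<in>T. x a * pd b (pd c (g a b)) x)"
      unfolding sum_distrib_left by (rule sum.swap)
    also have "\<dots> = (\<Sum>b\<in>T. - pd b (g c b) x - pd c (g b b) x)" by (intro sum.cong refl r2 c) auto
    also have "\<dots> = - (\<Sum>b\<in>T. pd b (g b c) x) - (\<Sum>b\<in>T. pd c (g b b) x)"
      using c by (simp add: sum_subtractf sum_negf sf)
    finally show ?thesis unfolding Dg_def tr_pd by simp
  qed
  have s3: "(\<Sum>a\<in>T. x a * (\<Sum>b\<in>T. pd b (pd b (g a c)) x)) = - 2 * Dg n g c x"
  proof -
    have "(\<Sum>a\<in>T. x a * (\<Sum>b\<in>T. pd b (pd b (g a c)) x)) = (\<Sum>b\<in>T. \<Sum>a\<in>T. x a * pd b (pd b (g a c)) x)"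
      unfolding sum_distrib_left by (rule sum.swap)
    also have "\<dots> = (\<Sum>b\<in>T. - pd b (g b c) x - pd b (g b c) x)" by (intro sum.cong refl r2 c) auto
    finally show ?thesis unfolding Dg_def by (simp add: sum_subtractf sum_negf sum_distrib_left)
  qed
  have "(\<Sum>a\<in>T. x a * Lg n g a c x) = (\<Sum>a\<in>T. x a * (\<Sum>b\<in>T. pd a (pd b (g b c)) x))
      + (\<Sum>a\<in>T. x a * (\<Sum>b\<in>T. pd b (pd c (g a b)) x)) - (\<Sum>a\<in>T. x a * (\<Sum>b\<in>T. pd b (pd b (g a c)) x))"
    unfolding Lg_def by (simp add: algebra_simps sum.distrib sum_subtractf)
  then show ?thesis using s1 s2 s3 by (simp add: algebra_simps)
qed

lemma L_sym: assumes "a \<in> T" "c \<in> T" shows "Lg n g a c x = Lg n g c a x"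
proof -
  have e1: "(\<Sum>b\<in>T. pd a (pd b (g b c)) x) = (\<Sum>b\<in>T. pd b (pd a (g c b)) x)"
    by (intro sum.cong refl) (simp add: sf assms schwarz[OF ig])
  have e2: "(\<Sum>b\<in>T. pd b (pd c (g a b)) x) = (\<Sum>b\<in>T. pd c (pd b (g b a)) x)"
    by (intro sum.cong refl) (simp add: sf assms schwarz[OF ig])
  show ?thesis unfolding Lg_def e1 e2 using sf[OF assms] by simp
qed

lemma A_sym: assumes "a \<in> T" "c \<in> T" shows "Ag n g a c x = Ag n g c a x"
  unfolding Ag_def using L_sym[OF assms] by (simp add: kdelta_def)

lemma Ay: assumes c: "c \<in> T"
  shows "(\<Sum>b\<in>T. x b * Ag n g b c x) = ((real n - 2) * real k * Dg n g c x - Sg n g x * x c) / (real n - 3)"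
proof -
  have "(\<Sum>b\<in>T. x b * Ag n g b c x) = (\<Sum>b\<in>T. x b * ((real n - 2) * Lg n g b c x - Sg n g x * kdelta b c)) / (real n - 3)"
    unfolding Ag_def sum_divide_distrib by (intro sum.cong refl) simp
  also have "(\<Sum>b\<in>T. x b * ((real n - 2) * Lg n g b c x - Sg n g x * kdelta b c))
      = (real n - 2) * (\<Sum>b\<in>T. x b * Lg n g b c x) - Sg n g x * (\<Sum>b\<in>T. kdelta b c * x b)"
    by (simp add: sum_subtractf sum.distrib sum_distrib_left algebra_simps)
  also have "\<dots> = (real n - 2) * real k * Dg n g c x - Sg n g x * x c"
    using Ly[OF c] kdelta_sum'[OF finT c] by simp
  finally show ?thesis .
qed

lemma Ay2: assumes a: "a \<in> T"
  shows "(\<Sum>d\<in>T. x d * Ag n g a d x) = ((real n - 2) * real k * Dg n g a x - Sg n g x * x a) / (real n - 3)"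
proof -
  have "(\<Sum>d\<in>T. x d * Ag n g a d x) = (\<Sum>d\<in>T. x d * Ag n g d a x)"
    by (intro sum.cong refl) (simp add: A_sym a)
  then show ?thesis using Ay[OF a] by simp
qed

lemma yAy: "(\<Sum>b\<in>T. \<Sum>d\<in>T. x b * x d * Ag n g b d x) = - Sg n g x * ysq n x / (real n - 3)"
proof -
  have "(\<Sum>b\<in>T. \<Sum>d\<in>T. x b * x d * Ag n g b d x) = (\<Sum>d\<in>T. x d * (\<Sum>b\<in>T. x b * Ag n g b d x))"
    by (subst sum.swap) (simp add: sum_distrib_left mult_ac)
  also have "\<dots> = (\<Sum>d\<in>T. x d * ((real n - 2) * real k * Dg n g d x - Sg n g x * x d)) / (real n - 3)"
    unfolding sum_divide_distrib by (intro sum.cong refl) (simp add: Ay)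
  also have "(\<Sum>d\<in>T. x d * ((real n - 2) * real k * Dg n g d x - Sg n g x * x d))
     = (real n - 2) * real k * (\<Sum>d\<in>T. x d * Dg n g d x) - Sg n g x * ysq n x"
    unfolding ysq_TT by (simp add: sum_subtractf sum.distrib sum_distrib_left algebra_simps)
  also have "\<dots> = - Sg n g x * ysq n x" using yD by simp
  finally show ?thesis by simp
qed

lemma contr: assumes a: "a \<in> T" and c: "c \<in> T"
  shows "(\<Sum>b\<in>T. \<Sum>d\<in>T. x b * x d * Rg n g a b c d x) = real k * (real k + 1) * g a c x"
proof -
  have t1: "(\<Sum>b\<in>T. \<Sum>d\<in>T. x b * x d * pd a (pd c (g b d)) x) = 2 * g a c x"
  proof -
    have "(\<Sum>b\<in>T. \<Sum>d\<in>T. x b * x d * pd a (pd c (g b d)) x) = (\<Sum>b\<in>T. x b * (\<Sum>d\<in>T. x d * pd a (pd c (g d b)) x))"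
      by (intro sum.cong refl) (simp add: sum_distrib_left mult_ac sf)
    also have "\<dots> = (\<Sum>b\<in>T. x b * (- pd a (g c b) x - pd c (g a b) x))"
      by (intro sum.cong refl) (simp add: r2 a c)
    also have "\<dots> = - (\<Sum>b\<in>T. x b * pd a (g b c) x) - (\<Sum>b\<in>T. x b * pd c (g b a) x)"
      by (simp add: algebra_simps sum_subtractf sum.distrib sum_negf sf a c)
    also have "\<dots> = 2 * g a c x" using r1[OF a c] r1[OF c a] sym_x[OF a c] by simp
    finally show ?thesis .
  qed
  have t2: "(\<Sum>b\<in>T. \<Sum>d\<in>T. x b * x d * pd a (pd d (g b c)) x) = - (real k - 1) * g a c x"
  proof -
    have "(\<Sum>b\<in>T. \<Sum>d\<in>T. x b * x d * pd a (pd d (g b c)) x) = (\<Sum>b\<in>T. x b * (\<Sum>d\<in>T. x d * pd d (pd a (g b c)) x))"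
      by (intro sum.cong refl) (simp add: sum_distrib_left mult_ac schwarz[OF ig])
    also have "\<dots> = (\<Sum>b\<in>T. x b * ((real k - 1) * pd a (g b c) x))"
      by (intro sum.cong refl) (simp add: eul1)
    also have "\<dots> = (real k - 1) * (\<Sum>b\<in>T. x b * pd a (g b c) x)"
      by (simp add: sum_distrib_left mult_ac)
    finally show ?thesis using r1[OF a c] by (simp add: algebra_simps)
  qed
  have t3: "(\<Sum>b\<in>T. \<Sum>d\<in>T. x b * x d * pd b (pd c (g a d)) x) = - (real k - 1) * g a c x"
  proof -
    have "(\<Sum>b\<in>T. \<Sum>d\<in>T. x b * x d * pd b (pd c (g a d)) x) = (\<Sum>d\<in>T. x d * (\<Sum>b\<in>T. x b * pd b (pd c (g a d)) x))"
      by (subst sum.swap) (simp add: sum_distrib_left mult_ac)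
    also have "\<dots> = (\<Sum>d\<in>T. x d * ((real k - 1) * pd c (g d a) x))"
      by (intro sum.cong refl) (simp add: eul1 sf a)
    also have "\<dots> = (real k - 1) * (\<Sum>d\<in>T. x d * pd c (g d a) x)"
      by (simp add: sum_distrib_left mult_ac)
    finally show ?thesis using r1[OF c a] sym_x[OF a c] by (simp add: algebra_simps)
  qed
  have t4: "(\<Sum>b\<in>T. \<Sum>d\<in>T. x b * x d * pd b (pd d (g a c)) x) = (real k - 1) * real k * g a c x"
  proof -
    have "(\<Sum>b\<in>T. \<Sum>d\<in>T. x b * x d * pd b (pd d (g a c)) x) = (\<Sum>d\<in>T. x d * (\<Sum>b\<in>T. x b * pd b (pd d (g a c)) x))"
      by (subst sum.swap) (simp add: sum_distrib_left mult_ac)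
    also have "\<dots> = (\<Sum>d\<in>T. x d * ((real k - 1) * pd d (g a c) x))"
      by (intro sum.cong refl) (simp add: eul1)
    also have "\<dots> = (real k - 1) * (\<Sum>d\<in>T. x d * pd d (g a c) x)"
      by (simp add: sum_distrib_left mult_ac)
    finally show ?thesis using eul0 by simp
  qed
  have "(\<Sum>b\<in>T. \<Sum>d\<in>T. x b * x d * Rg n g a b c d x) =
      (\<Sum>b\<in>T. \<Sum>d\<in>T. x b * x d * pd a (pd c (g b d)) x) - (\<Sum>b\<in>T. \<Sum>d\<in>T. x b * x d * pd a (pd d (g b c)) x)
    - (\<Sum>b\<in>T. \<Sum>d\<in>T. x b * x d * pd b (pd c (g a d)) x) + (\<Sum>b\<in>T. \<Sum>d\<in>T. x b * x d * pd b (pd d (g a c)) x)"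
    unfolding Rg_def by (simp add: algebra_simps sum.distrib sum_subtractf)
  then show ?thesis using t1 t2 t3 t4 by (simp add: algebra_simps)
qed


lemma sum4: "(\<Sum>b\<in>T. \<Sum>d\<in>T. (f1 b d - f2 b d - f3 b d + f4 b d :: real)) =
   (\<Sum>b\<in>T. \<Sum>d\<in>T. f1 b d) - (\<Sum>b\<in>T. \<Sum>d\<in>T. f2 b d) - (\<Sum>b\<in>T. \<Sum>d\<in>T. f3 b d) + (\<Sum>b\<in>T. \<Sum>d\<in>T. f4 b d)"
  by (simp add: sum_subtractf sum.distrib)

lemma Qsum: assumes a: "a \<in> T" and c: "c \<in> T"
  shows "(\<Sum>b\<in>T. \<Sum>d\<in>T. x b * x d * (Ag n g b d x * kdelta a c - Ag n g b c x * kdelta a d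
           - Ag n g a d x * kdelta b c + Ag n g a c x * kdelta b d))
   = kdelta a c * (- Sg n g x * ysq n x / (real n - 3))
     - x a * (((real n - 2) * real k * Dg n g c x - Sg n g x * x c) / (real n - 3))
     - x c * (((real n - 2) * real k * Dg n g a x - Sg n g x * x a) / (real n - 3))
     + ysq n x * Ag n g a c x"
proof -
  let ?A = "Ag n g"
  have e1: "(\<Sum>b\<in>T. \<Sum>d\<in>T. x b * x d * (?A b d x * kdelta a c)) = kdelta a c * (- Sg n g x * ysq n x / (real n - 3))"
  proof -
    have "(\<Sum>b\<in>T. \<Sum>d\<in>T. x b * x d * (?A b d x * kdelta a c)) = kdelta a c * (\<Sum>b\<in>T. \<Sum>d\<in>T. x b * x d * ?A b d x)"
      by (simp add: sum_distrib_left mult_ac)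
    then show ?thesis using yAy by simp
  qed
  have e2: "(\<Sum>b\<in>T. \<Sum>d\<in>T. x b * x d * (?A b c x * kdelta a d)) = x a * (((real n - 2) * real k * Dg n g c x - Sg n g x * x c) / (real n - 3))"
  proof -
    have "\<And>b. (\<Sum>d\<in>T. x b * x d * (?A b c x * kdelta a d)) = x a * (x b * ?A b c x)"
    proof -
      fix b
      have "(\<Sum>d\<in>T. x b * x d * (?A b c x * kdelta a d)) = x b * ?A b c x * (\<Sum>d\<in>T. kdelta a d * x d)"
        by (simp add: sum_distrib_left mult_ac)
      then show "(\<Sum>d\<in>T. x b * x d * (?A b c x * kdelta a d)) = x a * (x b * ?A b c x)"
        using kdelta_sum[OF finT a, of x] by simp
    qed
    then have "(\<Sum>b\<in>T. \<Sum>d\<in>T. x b * x d * (?A b c x * kdelta a d)) = x a * (\<Sum>b\<in>T. x b * ?A b c x)"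
      by (simp add: sum_distrib_left)
    then show ?thesis using Ay[OF c] by simp
  qed
  have e3: "(\<Sum>b\<in>T. \<Sum>d\<in>T. x b * x d * (?A a d x * kdelta b c)) = x c * (((real n - 2) * real k * Dg n g a x - Sg n g x * x a) / (real n - 3))"
  proof -
    have "(\<Sum>b\<in>T. \<Sum>d\<in>T. x b * x d * (?A a d x * kdelta b c)) = (\<Sum>d\<in>T. x d * ?A a d x * (\<Sum>b\<in>T. kdelta b c * x b))"
      by (subst sum.swap) (simp add: sum_distrib_left mult_ac)
    also have "\<dots> = x c * (\<Sum>d\<in>T. x d * ?A a d x)"
      using kdelta_sum'[OF finT c, of x] by (simp add: sum_distrib_left mult_ac)
    finally show ?thesis using Ay2[OF a] by simp
  qed
  have e4: "(\<Sum>b\<in>T. \<Sum>d\<in>T. x b * x d * (?A a c x * kdelta b d)) = ysq n x * ?A a c x"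
  proof -
    have "\<And>b. b \<in> T \<Longrightarrow> (\<Sum>d\<in>T. x b * x d * (?A a c x * kdelta b d)) = ?A a c x * (x b * x b)"
    proof -
      fix b assume b: "b \<in> T"
      have "(\<Sum>d\<in>T. x b * x d * (?A a c x * kdelta b d)) = x b * ?A a c x * (\<Sum>d\<in>T. kdelta b d * x d)"
        by (simp add: sum_distrib_left mult_ac)
      then show "(\<Sum>d\<in>T. x b * x d * (?A a c x * kdelta b d)) = ?A a c x * (x b * x b)"
        using kdelta_sum[OF finT b, of x] by simp
    qed
    then have "(\<Sum>b\<in>T. \<Sum>d\<in>T. x b * x d * (?A a c x * kdelta b d)) = ?A a c x * (\<Sum>b\<in>T. x b * x b)"
      by (simp add: sum_distrib_left)
    then show ?thesis unfolding ysq_TT by simp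
  qed
  have "(\<Sum>b\<in>T. \<Sum>d\<in>T. x b * x d * (?A b d x * kdelta a c - ?A b c x * kdelta a d - ?A a d x * kdelta b c + ?A a c x * kdelta b d))
      = (\<Sum>b\<in>T. \<Sum>d\<in>T. x b * x d * (?A b d x * kdelta a c)) - (\<Sum>b\<in>T. \<Sum>d\<in>T. x b * x d * (?A b c x * kdelta a d))
        - (\<Sum>b\<in>T. \<Sum>d\<in>T. x b * x d * (?A a d x * kdelta b c)) + (\<Sum>b\<in>T. \<Sum>d\<in>T. x b * x d * (?A a c x * kdelta b d))"
    unfolding sum4[symmetric] by (simp add: algebra_simps)
  then show ?thesis using e1 e2 e3 e4 by simp
qed

lemma E1: assumes a: "a \<in> T" and c: "c \<in> T"
  shows "real k * (real k + 1) * (real n - 2) * (real n - 3) * g a c x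
     - 2 * Sg n g x * ysq n x * kdelta a c + 2 * Sg n g x * (x a * x c)
     - (real n - 2) * real k * (x a * Dg n g c x + x c * Dg n g a x)
     + (real n - 2) * (ysq n x * Lg n g a c x) = 0"
proof -
  let ?Q = "\<lambda>b d. Ag n g b d x * kdelta a c - Ag n g b c x * kdelta a d - Ag n g a d x * kdelta b c + Ag n g a c x * kdelta b d"
  have W: "(\<Sum>b\<in>T. \<Sum>d\<in>T. x b * x d * (Rg n g a b c d x + ?Q b d / (real n - 2))) = 0"
    by (intro sum.neutral ballI) (simp add: g_weyl a c)
  have "(\<Sum>b\<in>T. \<Sum>d\<in>T. x b * x d * (Rg n g a b c d x + ?Q b d / (real n - 2)))
     = (\<Sum>b\<in>T. \<Sum>d\<in>T. x b * x d * Rg n g a b c d x) + (\<Sum>b\<in>T. \<Sum>d\<in>T. x b * x d * ?Q b d) / (real n - 2)"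
    by (simp add: sum.distrib sum_divide_distrib algebra_simps)
  then have "real k * (real k + 1) * g a c x + (kdelta a c * (- Sg n g x * ysq n x / (real n - 3))
     - x a * (((real n - 2) * real k * Dg n g c x - Sg n g x * x c) / (real n - 3))
     - x c * (((real n - 2) * real k * Dg n g a x - Sg n g x * x a) / (real n - 3))
     + ysq n x * Ag n g a c x) / (real n - 2) = 0"
    using W contr[OF a c] Qsum[OF a c] by simp
  note h = this[unfolded Ag_def]
  have p: "real n - 2 \<noteq> 0" and q: "real n - 3 \<noteq> 0" using n6 by auto
  show ?thesis using alg1[OF p q h] .
qed


lemma isp_Lf: "isp n (\<lambda>x. Lg n g a c x)" using isp_L by (simp add: eta_contract_eq)

lemma schw3: "pd b (pd a (pd a (g e f))) x = pd a (pd a (pd b (g e f))) x"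
proof -
  have 1: "pd b (pd a (pd a (g e f))) x = pd a (pd b (pd a (g e f))) x" by (rule schwarz[OF ig1])
  have 2: "pd b (pd a (g e f)) = pd a (pd b (g e f))" by (rule schwarz_fun[OF ig])
  show ?thesis using 1 2 by simp
qed

lemma schw3b: "pd c (pd a (pd b (g e f))) x = pd a (pd b (pd c (g e f))) x"
proof -
  have 1: "pd c (pd a (pd b (g e f))) x = pd a (pd c (pd b (g e f))) x" by (rule schwarz[OF ig1])
  have 2: "pd c (pd b (g e f)) = pd b (pd c (g e f))" by (rule schwarz_fun[OF ig])
  show ?thesis using 1 2 by simp
qed

lemma divD: "(\<Sum>a\<in>T. pd a (Dg n g a) x) = Sg n g x"
proof -
  have "\<And>a. pd a (Dg n g a) x = (\<Sum>b\<in>T. pd a (pd b (g b a)) x)"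
    unfolding Dg_def[abs_def] by (rule pd_sum) (auto intro: ig1)
  then have "(\<Sum>a\<in>T. pd a (Dg n g a) x) = (\<Sum>a\<in>T. \<Sum>b\<in>T. pd a (pd b (g b a)) x)" by simp
  also have "\<dots> = Sg n g x" unfolding Sg_def by (intro sum.cong refl) (simp add: sf)
  finally show ?thesis .
qed

lemma pdL: "pd a (Lg n g a c) x = (\<Sum>b\<in>T. pd a (pd a (pd b (g b c))) x) + (\<Sum>b\<in>T. pd a (pd b (pd c (g a b))) x)
     - (\<Sum>b\<in>T. pd a (pd b (pd b (g a c))) x)"
proof -
  have e: "Lg n g a c = (\<lambda>x. (\<Sum>b\<in>T. pd a (pd b (g b c)) x) + (\<Sum>b\<in>T. pd b (pd c (g a b)) x)
                 - (\<Sum>b\<in>T. pd b (pd b (g a c)) x))" by (rule ext) (simp add: Lg_def)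
  show ?thesis unfolding e
    by (simp add: pd_add[of n] pd_diff[of n] pd_sum[of _ n] isp_add isp_diff isp_sum ig2 ig3)
qed

lemma divL: assumes c: "c \<in> T" shows "(\<Sum>a\<in>T. pd a (Lg n g a c) x) = pd c (Sg n g) x"
proof -
  have t13: "(\<Sum>a\<in>T. \<Sum>b\<in>T. pd a (pd b (pd b (g a c))) x) = (\<Sum>a\<in>T. \<Sum>b\<in>T. pd a (pd a (pd b (g b c))) x)"
  proof -
    have "(\<Sum>a\<in>T. \<Sum>b\<in>T. pd a (pd b (pd b (g a c))) x) = (\<Sum>a\<in>T. \<Sum>b\<in>T. pd b (pd a (pd a (g b c))) x)"
      by (rule sum.swap)
    also have "\<dots> = (\<Sum>a\<in>T. \<Sum>b\<in>T. pd a (pd a (pd b (g b c))) x)"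
      by (intro sum.cong refl) (rule schw3)
    finally show ?thesis .
  qed
  have t2: "(\<Sum>a\<in>T. \<Sum>b\<in>T. pd a (pd b (pd c (g a b))) x) = pd c (Sg n g) x"
  proof -
    have "pd c (Sg n g) x = (\<Sum>a\<in>T. \<Sum>b\<in>T. pd c (pd a (pd b (g a b))) x)"
      unfolding Sg_def[abs_def] by (simp add: pd_sum[of _ n] isp_sum ig2)
    also have "\<dots> = (\<Sum>a\<in>T. \<Sum>b\<in>T. pd a (pd b (pd c (g a b))) x)"
      by (intro sum.cong refl) (rule schw3b)
    finally show ?thesis by simp
  qed
  have "(\<Sum>a\<in>T. pd a (Lg n g a c) x) = (\<Sum>a\<in>T. \<Sum>b\<in>T. pd a (pd a (pd b (g b c))) x) + (\<Sum>a\<in>T. \<Sum>b\<in>T. pd a (pd b (pd c (g a b))) x)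
     - (\<Sum>a\<in>T. \<Sum>b\<in>T. pd a (pd b (pd b (g a c))) x)"
    unfolding pdL by (simp add: sum.distrib sum_subtractf)
  then show ?thesis using t13 t2 by simp
qed


lemma cardT': "real (card T) = real n - 1"
  using n6 by (simp add: TT_def of_nat_diff)
lemma cardT: "(\<Sum>a\<in>T. (r::real)) = (real n - 1) * r"
  using cardT' by simp

lemma Ta: "a \<in> T \<Longrightarrow> isp n (\<lambda>x. x a)" by (rule isp_coord[OF TT1])

lemma s_ii: assumes c: "c \<in> T"
  shows "(\<Sum>a\<in>T. kdelta a c * pd a (\<lambda>x. Sg n g x * ysq n x) x) = pd c (Sg n g) x * ysq n x + Sg n g x * (2 * x c)"
proof -
  have "(\<Sum>a\<in>T. kdelta a c * pd a (\<lambda>x. Sg n g x * ysq n x) x) = pd c (\<lambda>x. Sg n g x * ysq n x) x"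
    by (rule kdelta_sum'[OF finT c])
  also have "\<dots> = pd c (Sg n g) x * ysq n x + Sg n g x * (2 * x c)"
    by (simp add: pd_mult[OF isp_S isp_ysq] pd_ysq_TT[OF c])
  finally show ?thesis .
qed

lemma s_iii: assumes c: "c \<in> T"
  shows "(\<Sum>a\<in>T. pd a (\<lambda>x. Sg n g x * (x a * x c)) x) = (real k - 2) * Sg n g x * x c + real n * Sg n g x * x c"
proof -
  have "\<And>a. a \<in> T \<Longrightarrow> pd a (\<lambda>x. Sg n g x * (x a * x c)) x = x c * (x a * pd a (Sg n g) x) + Sg n g x * x c + Sg n g x * (kdelta a c * x a)"
  proof -
    fix a assume a: "a \<in> T"
    have "pd a (\<lambda>x. Sg n g x * (x a * x c)) x = pd a (Sg n g) x * (x a * x c) + Sg n g x * pd a (\<lambda>x. x a * x c) x"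
      by (rule pd_mult[OF isp_S isp_mult[OF Ta[OF a] Ta[OF c]]])
    also have "pd a (\<lambda>x. x a * x c) x = kdelta a a * x c + x a * kdelta a c"
      using pd_coord_mult[OF Ta[OF c] TT1[OF a]] pd_coord by simp
    finally show "pd a (\<lambda>x. Sg n g x * (x a * x c)) x = x c * (x a * pd a (Sg n g) x) + Sg n g x * x c + Sg n g x * (kdelta a c * x a)"
      by (simp add: kdelta_def algebra_simps)
  qed
  then have "(\<Sum>a\<in>T. pd a (\<lambda>x. Sg n g x * (x a * x c)) x) = (\<Sum>a\<in>T. x c * (x a * pd a (Sg n g) x) + Sg n g x * x c + Sg n g x * (kdelta a c * x a))"
    by (intro sum.cong refl) simp
  also have "\<dots> = x c * (\<Sum>a\<in>T. x a * pd a (Sg n g) x) + (real n - 1) * (Sg n g x * x c) + Sg n g x * (\<Sum>a\<in>T. kdelta a c * x a)"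
    by (simp add: sum.distrib sum_distrib_left cardT')
  also have "\<dots> = (real k - 2) * Sg n g x * x c + real n * Sg n g x * x c"
    by (simp only: eulS kdelta_sum'[OF finT c]) (simp add: algebra_simps)
  finally show ?thesis .
qed

lemma s_iv: assumes c: "c \<in> T"
  shows "(\<Sum>a\<in>T. pd a (\<lambda>x. x a * Dg n g c x) x) = (real n - 1) * Dg n g c x + (real k - 1) * Dg n g c x"
proof -
  have "(\<Sum>a\<in>T. pd a (\<lambda>x. x a * Dg n g c x) x) = (\<Sum>a\<in>T. Dg n g c x + x a * pd a (Dg n g c) x)"
    by (intro sum.cong refl) (simp add: pd_coord_mult[OF isp_D TT1] kdelta_def)
  also have "\<dots> = (real n - 1) * Dg n g c x + (real k - 1) * Dg n g c x"
    by (simp add: sum.distrib cardT' eulD)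
  finally show ?thesis .
qed

lemma s_v: assumes c: "c \<in> T"
  shows "(\<Sum>a\<in>T. pd a (\<lambda>x. x c * Dg n g a x) x) = Dg n g c x + x c * Sg n g x"
proof -
  have "(\<Sum>a\<in>T. pd a (\<lambda>x. x c * Dg n g a x) x) = (\<Sum>a\<in>T. kdelta a c * Dg n g a x + x c * pd a (Dg n g a) x)"
    by (intro sum.cong refl) (simp add: pd_coord_mult[OF isp_D TT1[OF c]])
  also have "\<dots> = Dg n g c x + x c * Sg n g x"
    by (simp add: sum.distrib kdelta_sum'[OF finT c] sum_distrib_left[symmetric] divD)
  finally show ?thesis .
qed

lemma s_vi: assumes c: "c \<in> T"
  shows "(\<Sum>a\<in>T. pd a (\<lambda>x. ysq n x * Lg n g a c x) x) = 2 * real k * Dg n g c x + ysq n x * pd c (Sg n g) x"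
proof -
  have "(\<Sum>a\<in>T. pd a (\<lambda>x. ysq n x * Lg n g a c x) x) = (\<Sum>a\<in>T. 2 * (x a * Lg n g a c x) + ysq n x * pd a (Lg n g a c) x)"
    by (intro sum.cong refl) (simp add: pd_mult[OF isp_ysq isp_Lf] pd_ysq_TT eta_contract_eq)
  also have "\<dots> = 2 * (\<Sum>a\<in>T. x a * Lg n g a c x) + ysq n x * (\<Sum>a\<in>T. pd a (Lg n g a c) x)"
    by (simp add: sum.distrib sum_distrib_left)
  also have "\<dots> = 2 * real k * Dg n g c x + ysq n x * pd c (Sg n g) x"
    using Ly[OF c] divL[OF c] by simp
  finally show ?thesis .
qed


lemma Dform: assumes c: "c \<in> T"
  shows "(real n - 2) * (real k)^2 * Dg n g c x = (real k - 2) * Sg n g x * x c - ysq n x * pd c (Sg n g) x"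
proof -
  define C1 where "C1 = real k * (real k + 1) * (real n - 2) * (real n - 3)"
  define C2 where "C2 = (real n - 2) * real k"
  define \<Phi> where "\<Phi> a = (\<lambda>x. C1 * g a c x - (2 * kdelta a c) * (Sg n g x * ysq n x) + 2 * (Sg n g x * (x a * x c))
      - C2 * (x a * Dg n g c x) - C2 * (x c * Dg n g a x) + (real n - 2) * (ysq n x * Lg n g a c x))" for a
  have z: "\<And>a y. a \<in> T \<Longrightarrow> \<Phi> a y = 0"
  proof -
    fix a y assume a: "a \<in> T"
    have "\<Phi> a y = real k * (real k + 1) * (real n - 2) * (real n - 3) * g a c y
     - 2 * Sg n g y * ysq n y * kdelta a c + 2 * Sg n g y * (y a * y c)
     - (real n - 2) * real k * (y a * Dg n g c y + y c * Dg n g a y)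
     + (real n - 2) * (ysq n y * Lg n g a c y)"
      unfolding \<Phi>_def C1_def C2_def by (simp add: algebra_simps)
    then show "\<Phi> a y = 0" using E1[OF a c] by simp
  qed
  have pe: "\<And>a. a \<in> T \<Longrightarrow> pd a (\<Phi> a) x = C1 * pd a (g a c) x - (2 * kdelta a c) * pd a (\<lambda>x. Sg n g x * ysq n x) x
      + 2 * pd a (\<lambda>x. Sg n g x * (x a * x c)) x - C2 * pd a (\<lambda>x. x a * Dg n g c x) x - C2 * pd a (\<lambda>x. x c * Dg n g a x) x
      + (real n - 2) * pd a (\<lambda>x. ysq n x * Lg n g a c x) x"
  proof -
    fix a assume a: "a \<in> T"
    note I = ig isp_S isp_ysq Ta[OF a] Ta[OF c] isp_D isp_Lf
    show "?thesis a" unfolding \<Phi>_def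
      by (simp add: pd_add[of n] pd_diff[of n] pd_cmult[of n] I isp_mult isp_cmult isp_add isp_diff)
  qed
  have "0 = (\<Sum>a\<in>T. pd a (\<Phi> a) x)"
    by (rule sym, intro sum.neutral ballI pd_zero_fun z)
  also have "\<dots> = C1 * (\<Sum>a\<in>T. pd a (g a c) x) - 2 * (\<Sum>a\<in>T. kdelta a c * pd a (\<lambda>x. Sg n g x * ysq n x) x)
      + 2 * (\<Sum>a\<in>T. pd a (\<lambda>x. Sg n g x * (x a * x c)) x) - C2 * (\<Sum>a\<in>T. pd a (\<lambda>x. x a * Dg n g c x) x)
      - C2 * (\<Sum>a\<in>T. pd a (\<lambda>x. x c * Dg n g a x) x) + (real n - 2) * (\<Sum>a\<in>T. pd a (\<lambda>x. ysq n x * Lg n g a c x) x)"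
    by (simp add: pe sum.distrib sum_subtractf sum_distrib_left mult.assoc)
  also have "\<dots> = C1 * Dg n g c x - 2 * (pd c (Sg n g) x * ysq n x + Sg n g x * (2 * x c))
      + 2 * ((real k - 2) * Sg n g x * x c + real n * Sg n g x * x c)
      - C2 * ((real n - 1) * Dg n g c x + (real k - 1) * Dg n g c x)
      - C2 * (Dg n g c x + x c * Sg n g x) + (real n - 2) * (2 * real k * Dg n g c x + ysq n x * pd c (Sg n g) x)"
    using s_ii[OF c] s_iii[OF c] s_iv[OF c] s_v[OF c] s_vi[OF c] Dg_def[of n g c x] by simp
  also have "\<dots> = (real n - 4) * ((real n - 2) * (real k)^2 * Dg n g c x - ((real k - 2) * Sg n g x * x c - ysq n x * pd c (Sg n g) x))"
    unfolding C1_def C2_def by (simp add: algebra_simps power2_eq_square)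
  finally have "(real n - 4) * ((real n - 2) * (real k)^2 * Dg n g c x - ((real k - 2) * Sg n g x * x c - ysq n x * pd c (Sg n g) x)) = 0"
    by simp
  moreover have "real n - 4 \<noteq> 0" using n6 by simp
  ultimately show ?thesis by simp
qed


lemma Sform: "(real n - 2) * (real k)^2 * Sg n g x = (real k - 2) * (real k + real n - 5) * Sg n g x - ysq n x * lap n (Sg n g) x"
proof -
  define K where "K = (real n - 2) * (real k)^2"
  have K0: "K \<noteq> 0" using n6 k2 unfolding K_def by simp
  define iK where "iK = 1/K"
  have Df: "\<And>c. c \<in> T \<Longrightarrow> Dg n g c = (\<lambda>x. iK * ((real k - 2) * Sg n g x * x c - ysq n x * pd c (Sg n g) x))"
  proof (rule ext)
    fix c y assume c: "c \<in> T"
    show "Dg n g c y = iK * ((real k - 2) * Sg n g y * y c - ysq n y * pd c (Sg n g) y)"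
      using Dform[OF c, of y] K0 unfolding iK_def K_def by (simp add: field_simps)
  qed
  have pc: "\<And>c. c \<in> T \<Longrightarrow> pd c (Dg n g c) x = iK * ((real k - 2) * (x c * pd c (Sg n g) x + Sg n g x)
          - (2 * (x c * pd c (Sg n g) x) + ysq n x * pd c (pd c (Sg n g)) x))"
  proof -
    fix c assume c: "c \<in> T"
    have "pd c (\<lambda>x. iK * ((real k - 2) * Sg n g x * x c - ysq n x * pd c (Sg n g) x)) x
        = iK * ((real k - 2) * pd c (\<lambda>x. Sg n g x * x c) x - pd c (\<lambda>x. ysq n x * pd c (Sg n g) x) x)"
      by (simp add: pd_cmult[of n] pd_diff[of n] isp_mult isp_cmult isp_diff isp_S Ta[OF c] isp_ysq isp_pd mult.assoc)
    also have "pd c (\<lambda>x. Sg n g x * x c) x = pd c (Sg n g) x * x c + Sg n g x"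
      using pd_mult[OF isp_S Ta[OF c], of c x] pd_coord by (simp add: kdelta_def)
    also have "pd c (\<lambda>x. ysq n x * pd c (Sg n g) x) x = 2 * (x c * pd c (Sg n g) x) + ysq n x * pd c (pd c (Sg n g)) x"
      using pd_mult[OF isp_ysq isp_pd[OF isp_S]] pd_ysq_TT[OF c] by simp
    finally show "?thesis c" using Df[OF c] by (simp add: mult_ac)
  qed
  have "Sg n g x = (\<Sum>c\<in>T. pd c (Dg n g c) x)" using divD by simp
  also have "\<dots> = iK * ((real k - 2) * ((\<Sum>c\<in>T. x c * pd c (Sg n g) x) + (real n - 1) * Sg n g x)
          - (2 * (\<Sum>c\<in>T. x c * pd c (Sg n g) x) + ysq n x * lap n (Sg n g) x))"
    by (simp add: pc lap_TT sum.distrib sum_subtractf sum_distrib_left cardT' algebra_simps)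
  also have "\<dots> = iK * ((real k - 2) * (real k + real n - 5) * Sg n g x - ysq n x * lap n (Sg n g) x)"
    unfolding eulS by (simp add: algebra_simps)
  finally show ?thesis using K0 unfolding iK_def K_def by (simp add: field_simps)
qed

lemma S0: "Sg n g x = 0"
proof -
  define \<mu> where "\<mu> = (real k - 2) * (real k + real n - 5) - (real n - 2) * (real k)^2"
  have "\<mu> < 0"
  proof -
    have kk: "real k \<ge> 2" and nn: "real n \<ge> 6" using k2 n6 by auto
    have "(real k - 2) * (real k + real n - 5) \<le> real k * (real k + real n - 5)"
      using kk nn by (intro mult_right_mono) auto
    moreover have "real k * (real k + real n - 5) < (real n - 2) * (real k)^2"
    proof -
      have "(real n - 3) * real k \<ge> (real n - 3) * 2" using kk nn by (intro mult_left_mono) auto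
      then have "real k + real n - 5 < (real n - 2) * real k" using kk nn by (simp add: algebra_simps)
      then have "real k * (real k + real n - 5) < real k * ((real n - 2) * real k)"
        using kk by (intro mult_strict_left_mono) auto
      then show ?thesis by (simp add: power2_eq_square mult_ac)
    qed
    ultimately show ?thesis unfolding \<mu>_def by simp
  qed
  moreover have "\<forall>x. \<mu> * Sg n g x = ysq n x * lap n (Sg n g) x"
    using Sform unfolding \<mu>_def by (simp add: algebra_simps)
  ultimately show ?thesis using iter_lemma[OF n6, of "k-2"] hp_S nf_S by blast
qed

lemma D0: assumes c: "c \<in> T" shows "Dg n g c x = 0"
proof -
  have "pd c (Sg n g) x = 0" by (rule pd_zero_fun) (rule S0)
  then have "(real n - 2) * (real k)^2 * Dg n g c x = 0" using Dform[OF c, of x] S0 by simp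
  then show ?thesis using n6 k2 by simp
qed

lemma L_lap: assumes a: "a \<in> T" and c: "c \<in> T" shows "Lg n g a c x = - lap n (g a c) x"
proof -
  have p1: "(\<Sum>b\<in>T. pd a (pd b (g b c)) x) = 0"
  proof -
    have "(\<Sum>b\<in>T. pd a (pd b (g b c)) x) = pd a (Dg n g c) x"
      unfolding Dg_def[abs_def] by (rule pd_sum[symmetric]) (auto intro: ig1)
    also have "\<dots> = 0" by (rule pd_zero_fun) (rule D0[OF c])
    finally show ?thesis .
  qed
  have p2: "(\<Sum>b\<in>T. pd b (pd c (g a b)) x) = 0"
  proof -
    have "(\<Sum>b\<in>T. pd b (pd c (g a b)) x) = (\<Sum>b\<in>T. pd c (pd b (g b a)) x)"
      by (intro sum.cong refl) (simp add: sf a schwarz[OF ig])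
    also have "\<dots> = pd c (Dg n g a) x"
      unfolding Dg_def[abs_def] by (rule pd_sum[symmetric]) (auto intro: ig1)
    also have "\<dots> = 0" by (rule pd_zero_fun) (rule D0[OF a])
    finally show ?thesis .
  qed
  show ?thesis unfolding Lg_def lap_TT using p1 p2 by simp
qed

lemma g0: assumes a: "a \<in> T" and c: "c \<in> T" shows "g a c x = 0"
proof -
  define \<mu> where "\<mu> = real k * (real k + 1) * (real n - 3)"
  have "\<forall>x. \<mu> * g a c x = ysq n x * lap n (g a c) x"
  proof
    fix y
    have "real k * (real k + 1) * (real n - 2) * (real n - 3) * g a c y + (real n - 2) * (ysq n y * (- lap n (g a c) y)) = 0"
      using E1[OF a c, of y] S0[of y] D0[OF a, of y] D0[OF c, of y] L_lap[OF a c, of y] by simp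
    then have "(real n - 2) * (\<mu> * g a c y - ysq n y * lap n (g a c) y) = 0"
      unfolding \<mu>_def by (simp add: algebra_simps)
    then show "\<mu> * g a c y = ysq n y * lap n (g a c) y" using n6 by simp
  qed
  moreover have "\<mu> > real k * (real k + real n - 3)"
  proof -
    have kk: "real k \<ge> 2" and nn: "real n \<ge> 6" using k2 n6 by auto
    have "real k * (real n - 3) \<ge> real k * 3" using kk nn by (intro mult_left_mono) auto
    then have "real k + real n - 3 < (real k + 1) * (real n - 3)" using kk nn by (simp add: algebra_simps)
    then have "real k * (real k + real n - 3) < real k * ((real k + 1) * (real n - 3))"
      using kk by (intro mult_strict_left_mono) auto
    then show ?thesis unfolding \<mu>_def by (simp add: mult_ac)
  qed
  ultimately show ?thesis using iter_lemma[OF n6, of k] g_hp[of a c] g_nf[of a c] by blast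
qed

lemma L0: assumes a: "a \<in> T" and c: "c \<in> T" shows "Lg n g a c x = 0"
proof -
  have "\<And>b. pd b (g a c) = (\<lambda>x. 0)" using g0[OF a c] pd_zero_fun by blast
  then show ?thesis unfolding L_lap[OF a c] lap_TT by (simp add: pd_const)
qed

end

lemma pd_tang0:
  assumes "\<And>y. y n = 0 \<Longrightarrow> f y = 0" "c \<noteq> n" "x n = 0"
  shows "pd c f x = 0"
proof -
  have "(\<lambda>t. f (x(c:=t))) = (\<lambda>t. 0)" using assms by auto
  then show ?thesis unfolding pd_def by (simp add: DERIV_imp_deriv[OF DERIV_const])
qed

lemma split_sum: "n \<ge> 1 \<Longrightarrow> (\<Sum>m\<in>{1..n}. f m) = f n + (\<Sum>m\<in>TT n. (f m :: real))"
proof -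
  assume "n \<ge> 1"
  then have "{1..n} = insert n (TT n)" "n \<notin> TT n" by (auto simp: TT_def)
  then show ?thesis by simp
qed

lemma alg2:
  fixes N q S \<kappa> A L :: real
  assumes N: "N \<ge> 6"
    and h1: "0 = q + ((- 1 / (N - 1) * S) * \<kappa> + A) / (N - 2)"
    and h2: "A = L - q - 1 / (N - 1) * S * \<kappa>"
  shows "A = ((N - 2) * L - S * \<kappa>) / (N - 3)"
proof -
  have n1: "N - 1 \<noteq> 0" "N - 2 \<noteq> 0" "N - 3 \<noteq> 0" using N by auto
  define c where "c = S * \<kappa> / (N - 1)"
  have cc: "1 / (N - 1) * S * \<kappa> = c" "(- 1 / (N - 1) * S) * \<kappa> = - c" unfolding c_def by simp_all
  have q: "q = - ((A - c) / (N - 2))" using h1 unfolding cc by simp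
  have "A = L + (A - c) / (N - 2) - c" using h2 unfolding cc q by simp
  then have "A * (N - 2) = (L + (A - c) / (N - 2) - c) * (N - 2)" by simp
  also have "\<dots> = L * (N - 2) + (A - c) / (N - 2) * (N - 2) - c * (N - 2)" by (simp only: ring_distribs)
  also have "(A - c) / (N - 2) * (N - 2) = A - c" using n1(2) by simp
  finally have "A * (N - 3) = L * (N - 2) - c * (N - 1)" by (simp add: algebra_simps)
  also have "c * (N - 1) = S * \<kappa>" unfolding c_def using n1 by simp
  finally show ?thesis using n1 by (simp add: field_simps)
qed

locale gw0 =
  fixes n k :: nat and G :: "nat \<Rightarrow> nat \<Rightarrow> (nat\<Rightarrow>real) \<Rightarrow> real"
  assumes n6: "n \<ge> 6" and k2: "k \<ge> 2"
    and G_hp: "\<And>i l. hp n k (G i l)"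
    and G_sym: "\<And>i l. i \<in> {1..n} \<Longrightarrow> l \<in> {1..n} \<Longrightarrow> G i l = G l i"
    and G_tr: "\<And>x. (\<Sum>i\<in>{1..n}. G i i x) = 0"
    and G_in: "\<And>i x. i \<in> {1..n} \<Longrightarrow> G i n x = 0"
    and G_rad: "\<And>i x. i \<in> {1..n} \<Longrightarrow> x n = 0 \<Longrightarrow> (\<Sum>l\<in>{1..n}. G i l x * x l) = 0"
    and G_dn: "\<And>i l x. i \<in> {1..n} \<Longrightarrow> l \<in> {1..n} \<Longrightarrow> x n = 0 \<Longrightarrow> pd n (G i l) x = 0"
    and G_Z: "\<And>i j a b x. i \<in> {1..n} \<Longrightarrow> j \<in> {1..n} \<Longrightarrow> a \<in> {1..n} \<Longrightarrow> b \<in> {1..n}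
               \<Longrightarrow> x n = 0 \<Longrightarrow> Zten n G i j a b x = 0"
begin

definition gg :: "nat \<Rightarrow> nat \<Rightarrow> (nat\<Rightarrow>real) \<Rightarrow> real" where "gg a c x = G a c (x(n:=0))"

lemma nn: "n \<in> {1..n}" using n6 by simp
lemma n1: "n \<ge> 1" using n6 by simp
lemma iG: "isp n (G i l)" using hp_isp[OF G_hp] .

lemma Gn0: "i \<in> {1..n} \<Longrightarrow> G n i x = 0" using G_in G_sym nn by metis

lemma pdpd_in: "i \<in> {1..n} \<Longrightarrow> pd u (pd v (G i n)) x = 0"
proof -
  assume i: "i \<in> {1..n}"
  have "\<And>y. pd v (G i n) y = 0" by (rule pd_zero_fun) (rule G_in[OF i])
  then show ?thesis by (rule pd_zero_fun)
qed

lemma pdpd_ni: "i \<in> {1..n} \<Longrightarrow> pd u (pd v (G n i)) x = 0"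
proof -
  assume i: "i \<in> {1..n}"
  have "\<And>y. pd v (G n i) y = 0" by (rule pd_zero_fun) (rule Gn0[OF i])
  then show ?thesis by (rule pd_zero_fun)
qed

lemma gg_fun: "gg a c = (\<lambda>x. G a c (x(n:=0)))" by (rule ext) (simp add: gg_def)

lemma pd1_gg: "c \<noteq> n \<Longrightarrow> pd c (gg a b) = (\<lambda>x. pd c (G a b) (x(n:=0)))"
  unfolding gg_fun by (rule ext) (rule pd_rs)

lemma pd2_gg: "a \<noteq> n \<Longrightarrow> c \<noteq> n \<Longrightarrow> pd a (pd c (G b d)) (x(n:=0)) = pd a (pd c (gg b d)) x"
  unfolding pd1_gg by (simp add: pd_rs)

lemma mixed1: "c \<in> TT n \<Longrightarrow> a \<in> {1..n} \<Longrightarrow> b \<in> {1..n} \<Longrightarrow> y n = 0 \<Longrightarrow> pd c (pd n (G a b)) y = 0"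
  by (rule pd_tang0[of n]) (auto intro: G_dn simp: TTn)

lemma mixed2: "c \<in> TT n \<Longrightarrow> a \<in> {1..n} \<Longrightarrow> b \<in> {1..n} \<Longrightarrow> y n = 0 \<Longrightarrow> pd n (pd c (G a b)) y = 0"
  using mixed1 schwarz[OF iG] by metis

lemma gg_hp: "hp n k (gg a c)" unfolding gg_fun by (rule hp_rs[OF n1 G_hp])
lemma gg_nf: "nf n (gg a c)" unfolding gg_fun by (rule nf_rs)

lemma S_eq: "(\<Sum>m\<in>{1..n}. \<Sum>p\<in>{1..n}. pd m (pd p (G m p)) (x(n:=0))) = Sg n gg x"
proof -
  have "(\<Sum>m\<in>{1..n}. \<Sum>p\<in>{1..n}. pd m (pd p (G m p)) (x(n:=0)))
      = (\<Sum>p\<in>{1..n}. pd n (pd p (G n p)) (x(n:=0))) + (\<Sum>m\<in>TT n. \<Sum>p\<in>{1..n}. pd m (pd p (G m p)) (x(n:=0)))"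
    by (rule split_sum[OF n1])
  also have "(\<Sum>p\<in>{1..n}. pd n (pd p (G n p)) (x(n:=0))) = 0"
    by (intro sum.neutral ballI pdpd_ni)
  also have "(\<Sum>m\<in>TT n. \<Sum>p\<in>{1..n}. pd m (pd p (G m p)) (x(n:=0))) = (\<Sum>m\<in>TT n. \<Sum>p\<in>TT n. pd m (pd p (gg m p)) x)"
  proof (rule sum.cong[OF refl])
    fix m assume m: "m \<in> TT n"
    have "(\<Sum>p\<in>{1..n}. pd m (pd p (G m p)) (x(n:=0))) = pd m (pd n (G m n)) (x(n:=0)) + (\<Sum>p\<in>TT n. pd m (pd p (G m p)) (x(n:=0)))"
      by (rule split_sum[OF n1])
    also have "pd m (pd n (G m n)) (x(n:=0)) = 0" using pdpd_in TT1[OF m] by blast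
    also have "(\<Sum>p\<in>TT n. pd m (pd p (G m p)) (x(n:=0))) = (\<Sum>p\<in>TT n. pd m (pd p (gg m p)) x)"
      by (intro sum.cong refl pd2_gg TTn m) 
    finally show "(\<Sum>p\<in>{1..n}. pd m (pd p (G m p)) (x(n:=0))) = (\<Sum>p\<in>TT n. pd m (pd p (gg m p)) x)" by (simp only: add_0_left)
  qed
  finally show ?thesis unfolding Sg_def by (simp only: add_0_left)
qed

lemma Aten_T: assumes a: "a \<in> TT n" and c: "c \<in> TT n"
  shows "Aten n G a c (x(n:=0)) = Lg n gg a c x - pd n (pd n (G a c)) (x(n:=0)) - 1 / (real n - 1) * Sg n gg x * kdelta a c"
proof -
  have a1: "a \<in> {1..n}" and c1: "c \<in> {1..n}" using TT1[OF a] TT1[OF c] by auto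
  have y0: "(x(n:=0)) n = 0" by simp
  have e1: "(\<Sum>m\<in>{1..n}. pd a (pd m (G m c)) (x(n:=0))) = (\<Sum>m\<in>TT n. pd a (pd m (gg m c)) x)"
  proof -
    have "(\<Sum>m\<in>{1..n}. pd a (pd m (G m c)) (x(n:=0))) = pd a (pd n (G n c)) (x(n:=0)) + (\<Sum>m\<in>TT n. pd a (pd m (G m c)) (x(n:=0)))"
      by (rule split_sum[OF n1])
    also have "pd a (pd n (G n c)) (x(n:=0)) = 0" by (rule pdpd_ni[OF c1])
    also have "(\<Sum>m\<in>TT n. pd a (pd m (G m c)) (x(n:=0))) = (\<Sum>m\<in>TT n. pd a (pd m (gg m c)) x)"
      by (intro sum.cong refl pd2_gg TTn a)
    finally show ?thesis by (simp only: add_0_left)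
  qed
  have e2: "(\<Sum>m\<in>{1..n}. pd m (pd c (G a m)) (x(n:=0))) = (\<Sum>m\<in>TT n. pd m (pd c (gg a m)) x)"
  proof -
    have "(\<Sum>m\<in>{1..n}. pd m (pd c (G a m)) (x(n:=0))) = pd n (pd c (G a n)) (x(n:=0)) + (\<Sum>m\<in>TT n. pd m (pd c (G a m)) (x(n:=0)))"
      by (rule split_sum[OF n1])
    also have "pd n (pd c (G a n)) (x(n:=0)) = 0" by (rule pdpd_in[OF a1])
    also have "(\<Sum>m\<in>TT n. pd m (pd c (G a m)) (x(n:=0))) = (\<Sum>m\<in>TT n. pd m (pd c (gg a m)) x)"
      by (intro sum.cong refl pd2_gg TTn c)
    finally show ?thesis by (simp only: add_0_left)
  qed
  have e3: "(\<Sum>m\<in>{1..n}. pd m (pd m (G a c)) (x(n:=0))) = pd n (pd n (G a c)) (x(n:=0)) + (\<Sum>m\<in>TT n. pd m (pd m (gg a c)) x)"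
  proof -
    have "(\<Sum>m\<in>{1..n}. pd m (pd m (G a c)) (x(n:=0))) = pd n (pd n (G a c)) (x(n:=0)) + (\<Sum>m\<in>TT n. pd m (pd m (G a c)) (x(n:=0)))"
      by (rule split_sum[OF n1])
    also have "(\<Sum>m\<in>TT n. pd m (pd m (G a c)) (x(n:=0))) = (\<Sum>m\<in>TT n. pd m (pd m (gg a c)) x)"
      by (intro sum.cong refl pd2_gg TTn)
    finally show ?thesis .
  qed
  show ?thesis unfolding Aten_def e1 e2 e3 S_eq Lg_def by simp
qed

lemma Aten_nn: "Aten n G n n (x(n:=0)) = - 1 / (real n - 1) * Sg n gg x"
proof -
  have "(\<Sum>m\<in>{1..n}. pd n (pd m (G m n)) (x(n:=0))) = 0" by (intro sum.neutral ballI pdpd_in)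
  moreover have "(\<Sum>m\<in>{1..n}. pd m (pd n (G n m)) (x(n:=0))) = 0" by (intro sum.neutral ballI pdpd_ni)
  moreover have "(\<Sum>m\<in>{1..n}. pd m (pd m (G n n)) (x(n:=0))) = 0" by (intro sum.neutral ballI pdpd_ni[OF nn])
  ultimately show ?thesis unfolding Aten_def S_eq by (simp add: kdelta_def)
qed

lemma Z_ancn: assumes a: "a \<in> TT n" and c: "c \<in> TT n"
  shows "Zten n G a n c n (x(n:=0)) = pd n (pd n (G a c)) (x(n:=0))
     + (Aten n G n n (x(n:=0)) * kdelta a c + Aten n G a c (x(n:=0))) / (real n - 2)"
proof -
  have a1: "a \<in> {1..n}" and c1: "c \<in> {1..n}" using TT1[OF a] TT1[OF c] by auto
  have "a \<noteq> n" "c \<noteq> n" using a c by (auto simp: TTn)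
  then show ?thesis unfolding Zten_def
    using pdpd_ni[OF c1] pdpd_in[OF c1] mixed1[OF a a1 nn] mixed2[OF c a1 nn]
    by (simp add: kdelta_def pdpd_ni[OF nn] algebra_simps add_divide_distrib)
qed


lemma A_eq: assumes a: "a \<in> TT n" and c: "c \<in> TT n"
  shows "Aten n G a c (x(n:=0)) = Ag n gg a c x"
proof -
  have a1: "a \<in> {1..n}" and c1: "c \<in> {1..n}" using TT1[OF a] TT1[OF c] by auto
  have "Zten n G a n c n (x(n:=0)) = 0" by (rule G_Z[OF a1 nn c1 nn]) simp
  then have h1: "0 = pd n (pd n (G a c)) (x(n:=0)) + ((- 1 / (real n - 1) * Sg n gg x) * kdelta a c + Aten n G a c (x(n:=0))) / (real n - 2)"
    unfolding Z_ancn[OF a c] Aten_nn by simp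
  have h2: "Aten n G a c (x(n:=0)) = Lg n gg a c x - pd n (pd n (G a c)) (x(n:=0)) - 1 / (real n - 1) * Sg n gg x * kdelta a c"
    by (rule Aten_T[OF a c])
  have "real n \<ge> 6" using n6 by simp
  from alg2[OF this h1 h2] show ?thesis unfolding Ag_def by simp
qed

lemma Z_abcd: assumes a: "a \<in> TT n" and b: "b \<in> TT n" and c: "c \<in> TT n" and d: "d \<in> TT n"
  shows "Rg n gg a b c d x + (Ag n gg b d x * kdelta a c - Ag n gg b c x * kdelta a d
           - Ag n gg a d x * kdelta b c + Ag n gg a c x * kdelta b d) / (real n - 2) = 0"
proof -
  have "Zten n G a b c d (x(n:=0)) = 0" by (rule G_Z[OF TT1[OF a] TT1[OF b] TT1[OF c] TT1[OF d]]) simp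
  then show ?thesis unfolding Zten_def Rg_def
    using TTn[OF a] TTn[OF b] TTn[OF c] TTn[OF d]
    by (simp add: pd2_gg A_eq a b c d)
qed

lemma gg_sym: "a \<in> TT n \<Longrightarrow> c \<in> TT n \<Longrightarrow> gg a c = gg c a"
  unfolding gg_fun using G_sym TT1 by metis

lemma gg_tr: "(\<Sum>a\<in>TT n. gg a a x) = 0"
proof -
  have "(\<Sum>i\<in>{1..n}. G i i (x(n:=0))) = 0" by (rule G_tr)
  then have "G n n (x(n:=0)) + (\<Sum>a\<in>TT n. G a a (x(n:=0))) = 0" unfolding split_sum[OF n1] .
  then show ?thesis using Gn0[OF nn] unfolding gg_def by simp
qed

lemma gg_rad: assumes a: "a \<in> TT n" shows "(\<Sum>b\<in>TT n. x b * gg b a x) = 0"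
proof -
  have "(\<Sum>l\<in>{1..n}. G a l (x(n:=0)) * (x(n:=0)) l) = 0" by (rule G_rad[OF TT1[OF a]]) simp
  then have "G a n (x(n:=0)) * 0 + (\<Sum>l\<in>TT n. G a l (x(n:=0)) * (x(n:=0)) l) = 0"
    unfolding split_sum[OF n1] by simp
  moreover have "(\<Sum>l\<in>TT n. G a l (x(n:=0)) * (x(n:=0)) l) = (\<Sum>b\<in>TT n. x b * gg b a x)"
  proof (rule sum.cong[OF refl])
    fix l assume l: "l \<in> TT n"
    have "G a l = G l a" using G_sym TT1[OF a] TT1[OF l] by metis
    then show "G a l (x(n:=0)) * (x(n:=0)) l = x l * gg l a x" using TTn[OF l] unfolding gg_def by simp
  qed
  ultimately show ?thesis by simp
qed

lemma gw_inst: "gw n k gg"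
  by (unfold_locales) (auto simp: n6 k2 gg_hp gg_nf gg_tr Z_abcd intro: gg_sym gg_rad)

lemma main0: assumes "x n = 0" "a \<in> TT n" "c \<in> TT n"
  shows "G a c x = 0 \<and> Aten n G a c x = 0"
proof -
  interpret gw n k gg by (rule gw_inst)
  have xx: "x(n:=0) = x" using assms(1) by auto
  have "G a c x = gg a c x" unfolding gg_def xx ..
  moreover have "gg a c x = 0" by (rule g0[OF assms(2,3)])
  moreover have "Aten n G a c x = Ag n gg a c x" using A_eq[OF assms(2,3), of x] unfolding xx .
  moreover have "Ag n gg a c x = 0" unfolding Ag_def using L0[OF assms(2,3)] S0 by simp
  ultimately show ?thesis by simp
qed

end

lemma transfer:
  fixes \<phi> :: "nat \<Rightarrow> (nat\<Rightarrow>real) \<Rightarrow> real"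
  assumes K: "finite K" and inj: "inj_on e K" and k0: "k0 \<in> K" and Px: "P x"
    and Pscale: "\<And>y t. P y \<Longrightarrow> t > 0 \<Longrightarrow> P (\<lambda>j. t * y j)"
    and scale: "\<And>k y t. k \<in> K \<Longrightarrow> \<phi> k (\<lambda>j. t * y j) = t ^ e k * \<phi> k y"
    and zero: "\<And>y. P y \<Longrightarrow> (\<Sum>k\<in>K. \<phi> k y) = 0"
  shows "\<phi> k0 x = 0"
proof -
  define p where "p = (\<Sum>k\<in>K. Polynomial.monom (\<phi> k x) (e k))"
  have roots: "\<And>t. t > 0 \<Longrightarrow> poly p t = 0"
  proof -
    fix t :: real assume t: "t > 0"
    have "poly p t = (\<Sum>k\<in>K. \<phi> k x * t ^ e k)" unfolding p_def by (simp add: poly_sum poly_monom)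
    also have "\<dots> = (\<Sum>k\<in>K. \<phi> k (\<lambda>j. t * x j))" by (intro sum.cong refl) (simp add: scale)
    also have "\<dots> = 0" by (rule zero[OF Pscale[OF Px t]])
    finally show "poly p t = 0" .
  qed
  have "p = 0"
  proof (rule ccontr)
    assume "p \<noteq> 0"
    then have "finite {t. poly p t = 0}" by (rule poly_roots_finite)
    moreover have "{0<..} \<subseteq> {t. poly p t = 0}" using roots by auto
    ultimately have "finite {(0::real)<..}" by (rule finite_subset[rotated])
    then show False using infinite_Ioi[of "0::real"] by blast
  qed
  have "coeff p (e k0) = (\<Sum>k\<in>K. if e k = e k0 then \<phi> k x else 0)"
    unfolding p_def by (simp add: coeff_sum coeff_monom)
  also have "\<dots> = (\<Sum>k\<in>K. if k = k0 then \<phi> k x else 0)"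
    by (intro sum.cong refl) (use inj k0 in \<open>auto dest: inj_onD\<close>)
  also have "\<dots> = \<phi> k0 x" using K k0 by simp
  finally show ?thesis using \<open>p = 0\<close> by simp
qed

lemma hpp: "hp n k f \<Longrightarrow> hp n (k-2) (pd i (pd j f))"
proof -
  assume "hp n k f"
  then have "hp n (k-1-1) (pd i (pd j f))" by (intro hp_pd)
  moreover have "k - 1 - 1 = k - 2" by simp
  ultimately show ?thesis by simp
qed

lemma hp_Aten:
  assumes "\<And>i l. hp n k (F i l)"
  shows "hp n (k-2) (Aten n F i l)"
proof -
  have e: "Aten n F i l = (\<lambda>x. (\<Sum>m\<in>{1..n}. pd i (pd m (F m l)) x) + (\<Sum>m\<in>{1..n}. pd m (pd l (F i m)) x)
     - (\<Sum>m\<in>{1..n}. pd m (pd m (F i l)) x) - (1 / (real n - 1) * kdelta i l) * (\<Sum>m\<in>{1..n}. \<Sum>p\<in>{1..n}. pd m (pd p (F m p)) x))"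
    by (rule ext) (simp add: Aten_def mult_ac)
  show ?thesis unfolding e
    by (intro hp_add hp_diff hp_cmult hp_sum hpp assms) simp_all
qed

lemma hp_Zten:
  assumes "\<And>i l. hp n k (F i l)"
  shows "hp n (k-2) (Zten n F i j a b)"
proof -
  have e: "Zten n F i j a b = (\<lambda>x. pd i (pd a (F j b)) x - pd i (pd b (F j a)) x
   - pd j (pd a (F i b)) x + pd j (pd b (F i a)) x
   + (1 / (real n - 2)) *
       (kdelta i a * Aten n F j b x - kdelta i b * Aten n F j a x
        - kdelta j a * Aten n F i b x + kdelta j b * Aten n F i a x))"
    by (rule ext) (simp add: Zten_def mult_ac)
  show ?thesis unfolding e
    by (intro hp_add hp_diff hp_cmult hpp hp_Aten assms)
qed

lemma pdpd_add: "isp n f \<Longrightarrow> isp n g \<Longrightarrow> pd i (pd j (\<lambda>x. f x + g x)) x = pd i (pd j f) x + pd i (pd j g) x"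
  by (simp add: pd_add_fun[of n] pd_add[of n] isp_pd)

lemma pd_const_fun: "pd i (\<lambda>x. c) = (\<lambda>x. 0)"
  by (rule ext) (rule pd_const)

lemma Aten_add:
  assumes "\<And>i l. isp n (F1 i l)" "\<And>i l. isp n (F2 i l)"
  shows "Aten n (\<lambda>i l x. F1 i l x + F2 i l x) i k x = Aten n F1 i k x + Aten n F2 i k x"
  unfolding Aten_def by (simp add: pdpd_add[of n] assms sum.distrib algebra_simps)

lemma Zten_add:
  assumes "\<And>i l. isp n (F1 i l)" "\<And>i l. isp n (F2 i l)"
  shows "Zten n (\<lambda>i l x. F1 i l x + F2 i l x) i j a b x = Zten n F1 i j a b x + Zten n F2 i j a b x"
  unfolding Zten_def by (simp add: pdpd_add[of n] assms Aten_add[OF assms] algebra_simps)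

lemma Aten_zero: "Aten n (\<lambda>i l x. 0) i k x = 0"
  unfolding Aten_def by (simp add: pd_const_fun pd_const)

lemma Zten_zero: "Zten n (\<lambda>i l x. 0) i j a b x = 0"
  unfolding Zten_def by (simp add: pd_const_fun pd_const Aten_zero)

lemma Aten_sum:
  assumes "finite K" "\<And>k i l. isp n (F k i l)"
  shows "Aten n (\<lambda>i l x. \<Sum>k\<in>K. F k i l x) i a x = (\<Sum>k\<in>K. Aten n (F k) i a x)"
  using assms(1)
proof (induction K rule: finite_induct)
  case empty
  then show ?case using Aten_zero by simp
next
  case (insert q K)
  have "Aten n (\<lambda>i l x. \<Sum>k\<in>insert q K. F k i l x) i a x = Aten n (\<lambda>i l x. F q i l x + (\<Sum>k\<in>K. F k i l x)) i a x"
    using insert by simp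
  also have "\<dots> = Aten n (F q) i a x + Aten n (\<lambda>i l x. \<Sum>k\<in>K. F k i l x) i a x"
    by (rule Aten_add) (auto intro: assms(2) isp_sum insert)
  finally show ?case using insert by simp
qed

lemma Zten_sum:
  assumes "finite K" "\<And>k i l. isp n (F k i l)"
  shows "Zten n (\<lambda>i l x. \<Sum>k\<in>K. F k i l x) i j a b x = (\<Sum>k\<in>K. Zten n (F k) i j a b x)"
  using assms(1)
proof (induction K rule: finite_induct)
  case empty
  then show ?case using Zten_zero by simp
next
  case (insert q K)
  have "Zten n (\<lambda>i l x. \<Sum>k\<in>insert q K. F k i l x) i j a b x = Zten n (\<lambda>i l x. F q i l x + (\<Sum>k\<in>K. F k i l x)) i j a b x"
    using insert by simp
  also have "\<dots> = Zten n (F q) i j a b x + Zten n (\<lambda>i l x. \<Sum>k\<in>K. F k i l x) i j a b x"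
    by (rule Zten_add) (auto intro: assms(2) isp_sum insert)
  finally show ?case using insert by simp
qed

lemma finite_mindices: "finite (mindices n d)"
proof -
  have inj: "inj_on (\<lambda>\<alpha>. restrict \<alpha> {1..n}) (mindices n d)"
  proof (rule inj_onI)
    fix \<alpha> \<beta> assume a: "\<alpha> \<in> mindices n d" and b: "\<beta> \<in> mindices n d" and e: "restrict \<alpha> {1..n} = restrict \<beta> {1..n}"
    show "\<alpha> = \<beta>"
    proof
      fix j show "\<alpha> j = \<beta> j"
      proof (cases "j \<in> {1..n}")
        case True then show ?thesis using fun_cong[OF e, of j] by simp
      next
        case False then show ?thesis using a b unfolding mindices_def by auto
      qed
    qed
  qed
  have "(\<lambda>\<alpha>. restrict \<alpha> {1..n}) ` mindices n d \<subseteq> PiE {1..n} (\<lambda>_. {0..d})"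
  proof
    fix f assume "f \<in> (\<lambda>\<alpha>. restrict \<alpha> {1..n}) ` mindices n d"
    then obtain \<alpha> where a: "\<alpha> \<in> mindices n d" and f: "f = restrict \<alpha> {1..n}" by auto
    have "\<And>j. j \<in> {1..n} \<Longrightarrow> \<alpha> j \<le> d"
    proof -
      fix j assume j: "j \<in> {1..n}"
      have "\<alpha> j \<le> (\<Sum>i\<in>{1..n}. \<alpha> i)" by (rule member_le_sum) (use j in auto)
      then show "\<alpha> j \<le> d" using a unfolding mindices_def by auto
    qed
    then show "f \<in> PiE {1..n} (\<lambda>_. {0..d})" unfolding f by auto
  qed
  moreover have "finite (PiE {1..n} (\<lambda>_. {0..d::nat}))" by (intro finite_PiE) auto
  ultimately have "finite ((\<lambda>\<alpha>. restrict \<alpha> {1..n}) ` mindices n d)" by (rule finite_subset)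
  then show ?thesis using inj by (rule finite_imageD)
qed

theorem lemma2p2:
  fixes n :: nat
    and h :: "nat \<Rightarrow> nat \<Rightarrow> (nat \<Rightarrow> nat) \<Rightarrow> real"
    and H :: "nat \<Rightarrow> nat \<Rightarrow> (nat \<Rightarrow> real) \<Rightarrow> real"
  assumes n6: "n \<ge> 6"
    and H_poly: "\<And>i k x. H i k x =
                   (\<Sum>\<alpha>\<in>mindices n ((n - 2) div 2). h i k \<alpha> * monom n \<alpha> x)"
    and H_sym: "\<And>i k x. i \<in> {1..n} \<Longrightarrow> k \<in> {1..n} \<Longrightarrow> x n \<ge> 0 \<Longrightarrow> H i k x = H k i x"
    and H_tracefree: "\<And>x. x n \<ge> 0 \<Longrightarrow> (\<Sum>i\<in>{1..n}. H i i x) = 0"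
    and H_in: "\<And>i x. i \<in> {1..n} \<Longrightarrow> x n \<ge> 0 \<Longrightarrow> H i n x = 0"
    and H_radial: "\<And>i x. i \<in> {1..n} \<Longrightarrow> x n = 0 \<Longrightarrow> (\<Sum>k\<in>{1..n}. H i k x * x k) = 0"
    and H_dn: "\<And>i k x. i \<in> {1..n} \<Longrightarrow> k \<in> {1..n} \<Longrightarrow> x n = 0 \<Longrightarrow> pd n (H i k) x = 0"
    and Z0: "\<And>i j k l x. i \<in> {1..n} \<Longrightarrow> j \<in> {1..n} \<Longrightarrow> k \<in> {1..n} \<Longrightarrow> l \<in> {1..n}
               \<Longrightarrow> x n = 0 \<Longrightarrow> Zten n H i j k l x = 0"
  shows "\<forall>x i k. x n = 0 \<longrightarrow> i \<in> {1..n-1} \<longrightarrow> k \<in> {1..n-1} \<longrightarrow>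
           H i k x = 0 \<and> Aten n H i k x = 0"
proof -
  define d where "d = (n - 2) div 2"
  define M where "M = mindices n d"
  define K where "K = {2..d}"
  define Hk where "Hk q i l x = (\<Sum>\<alpha>\<in>{\<alpha>\<in>M. deg n \<alpha> = q}. h i l \<alpha> * monom n \<alpha> x)" for q i l x
  have finM: "finite M" unfolding M_def by (rule finite_mindices)
  have finK: "finite K" unfolding K_def by simp
  have K2: "\<And>q. q \<in> K \<Longrightarrow> q \<ge> 2" unfolding K_def by simp
  have Hk_fun: "\<And>q i l. Hk q i l = (\<lambda>x. \<Sum>\<alpha>\<in>{\<alpha>\<in>M. deg n \<alpha> = q}. h i l \<alpha> * monom n \<alpha> x)"
    by (rule ext) (simp add: Hk_def)
  have hpk: "\<And>q i l. hp n q (Hk q i l)"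
    unfolding Hk_fun by (rule hp_sumI) (use finM in auto)
  have ipk: "\<And>q i l. isp n (Hk q i l)" using hp_isp[OF hpk] .
  have Hsum: "\<And>i l x. H i l x = (\<Sum>q\<in>K. Hk q i l x)"
  proof -
    fix i l x
    have "deg n ` M \<subseteq> K" unfolding M_def K_def mindices_def deg_def d_def by auto
    then have "(\<Sum>q\<in>K. \<Sum>\<alpha>\<in>{\<alpha>\<in>M. deg n \<alpha> = q}. h i l \<alpha> * monom n \<alpha> x) = (\<Sum>\<alpha>\<in>M. h i l \<alpha> * monom n \<alpha> x)"
      by (rule sum.group[OF finM finK])
    then show "H i l x = (\<Sum>q\<in>K. Hk q i l x)" unfolding Hk_def H_poly M_def d_def by simp
  qed
  have Hfun: "H = (\<lambda>i l x. \<Sum>q\<in>K. Hk q i l x)" by (intro ext) (rule Hsum)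
  have Hil: "\<And>i l. H i l = (\<lambda>x. \<Sum>q\<in>K. Hk q i l x)" by (intro ext) (rule Hsum)
  have injid: "inj_on (\<lambda>q. q) K" by simp
  have Pge: "\<And>y t. (y::nat\<Rightarrow>real) n \<ge> 0 \<Longrightarrow> (t::real) > 0 \<Longrightarrow> (\<lambda>j. t * y j) n \<ge> 0" by simp
  have Peq: "\<And>y t. (y::nat\<Rightarrow>real) n = 0 \<Longrightarrow> (t::real) > 0 \<Longrightarrow> (\<lambda>j. t * y j) n = 0" by simp
  have comp: "gw0 n q (Hk q)" if q: "q \<in> K" for q
  proof (unfold_locales)
    show "6 \<le> n" by (rule n6)
    show "2 \<le> q" by (rule K2[OF q])
    show "\<And>i l. hp n q (Hk q i l)" by (rule hpk)
    show "\<And>i l. i \<in> {1..n} \<Longrightarrow> l \<in> {1..n} \<Longrightarrow> Hk q i l = Hk q l i"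
    proof -
      fix i l assume i: "i \<in> {1..n}" and l: "l \<in> {1..n}"
      have Hs: "\<And>y. y n \<ge> 0 \<Longrightarrow> H i l y - H l i y = 0" using H_sym[OF i l] by simp
      have "\<And>y. y n \<ge> 0 \<Longrightarrow> Hk q i l y - Hk q l i y = 0"
      proof -
        fix y :: "nat \<Rightarrow> real" assume y: "y n \<ge> 0"
        show "Hk q i l y - Hk q l i y = 0"
          by (rule transfer[where \<phi>="\<lambda>q y. Hk q i l y - Hk q l i y" and e="\<lambda>q. q" and P="\<lambda>y. y n \<ge> 0" and x=y, OF finK injid q y])
             (simp_all add: zero_le_mult_iff hp_scale[OF hpk] right_diff_distrib sum_subtractf Hsum[symmetric] Hs)
      qed
      then have "\<And>y. Hk q i l y - Hk q l i y = 0" by (rule hp_half[OF hp_diff[OF hpk hpk]])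
      then show "Hk q i l = Hk q l i" by auto
    qed
    show "\<And>x. (\<Sum>i\<in>{1..n}. Hk q i i x) = 0"
    proof -
      have "\<And>y. y n \<ge> 0 \<Longrightarrow> (\<Sum>i\<in>{1..n}. Hk q i i y) = 0"
      proof -
        fix y :: "nat \<Rightarrow> real" assume y: "y n \<ge> 0"
        show "(\<Sum>i\<in>{1..n}. Hk q i i y) = 0"
        proof (rule transfer[where \<phi>="\<lambda>q y. \<Sum>i\<in>{1..n}. Hk q i i y" and e="\<lambda>q. q" and P="\<lambda>y. y n \<ge> 0" and x=y, OF finK injid q y])
          show "\<And>(y::nat\<Rightarrow>real) (t::real). 0 \<le> y n \<Longrightarrow> 0 < t \<Longrightarrow> 0 \<le> t * y n" by (simp add: zero_le_mult_iff)
          show "\<And>k y t. k \<in> K \<Longrightarrow> (\<Sum>i\<in>{1..n}. Hk k i i (\<lambda>j. t * y j)) = t ^ k * (\<Sum>i\<in>{1..n}. Hk k i i y)"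
            by (simp add: hp_scale[OF hpk] sum_distrib_left)
          show "\<And>y. 0 \<le> y n \<Longrightarrow> (\<Sum>k\<in>K. \<Sum>i\<in>{1..n}. Hk k i i y) = 0"
            by (subst sum.swap, simp only: Hsum[symmetric], erule H_tracefree)
        qed
      qed
      moreover have "hp n q (\<lambda>x. \<Sum>i\<in>{1..n}. Hk q i i x)" by (intro hp_sum hpk) simp
      ultimately show "\<And>x. (\<Sum>i\<in>{1..n}. Hk q i i x) = 0" using hp_half by blast
    qed
    show "\<And>i x. i \<in> {1..n} \<Longrightarrow> Hk q i n x = 0"
    proof -
      fix i x assume i: "i \<in> {1..n}"
      have "\<And>y. y n \<ge> 0 \<Longrightarrow> Hk q i n y = 0"
      proof -
        fix y :: "nat \<Rightarrow> real" assume y: "y n \<ge> 0"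
        show "Hk q i n y = 0"
          by (rule transfer[where \<phi>="\<lambda>q y. Hk q i n y" and e="\<lambda>q. q" and P="\<lambda>y. y n \<ge> 0" and x=y, OF finK injid q y])
             (simp_all add: zero_le_mult_iff hp_scale[OF hpk] Hsum[symmetric] H_in[OF i])
      qed
      then show "Hk q i n x = 0" by (rule hp_half[OF hpk])
    qed
    show "\<And>i x. i \<in> {1..n} \<Longrightarrow> x n = 0 \<Longrightarrow> (\<Sum>l\<in>{1..n}. Hk q i l x * x l) = 0"
    proof -
      fix i x assume i: "i \<in> {1..n}" and x: "(x::nat\<Rightarrow>real) n = 0"
      show "(\<Sum>l\<in>{1..n}. Hk q i l x * x l) = 0"
      proof (rule transfer[where \<phi>="\<lambda>q y. \<Sum>l\<in>{1..n}. Hk q i l y * y l" and e="\<lambda>q. q + 1" and P="\<lambda>y. y n = 0" and x=x, OF finK _ q x])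
        show "\<And>(y::nat\<Rightarrow>real) (t::real). y n = 0 \<Longrightarrow> 0 < t \<Longrightarrow> t * y n = 0" by simp
        show "inj_on (\<lambda>q. q + 1) K" by (simp add: inj_on_def)
        show "\<And>k y t. k \<in> K \<Longrightarrow> (\<Sum>l\<in>{1..n}. Hk k i l (\<lambda>j. t * y j) * (t * y l)) = t ^ (k + 1) * (\<Sum>l\<in>{1..n}. Hk k i l y * y l)"
          by (simp add: hp_scale[OF hpk] sum_distrib_left mult_ac)
        show "\<And>y. y n = 0 \<Longrightarrow> (\<Sum>k\<in>K. \<Sum>l\<in>{1..n}. Hk k i l y * y l) = 0"
          by (subst sum.swap, simp only: sum_distrib_right[symmetric] Hsum[symmetric], erule H_radial[OF i])
      qed
    qed
    show "\<And>i l x. i \<in> {1..n} \<Longrightarrow> l \<in> {1..n} \<Longrightarrow> x n = 0 \<Longrightarrow> pd n (Hk q i l) x = 0"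
    proof -
      fix i l x assume i: "i \<in> {1..n}" and l: "l \<in> {1..n}" and x: "(x::nat\<Rightarrow>real) n = 0"
      show "pd n (Hk q i l) x = 0"
      proof (rule transfer[where \<phi>="\<lambda>q y. pd n (Hk q i l) y" and e="\<lambda>q. q - 1" and P="\<lambda>y. y n = 0" and x=x, OF finK _ q x])
        show "\<And>(y::nat\<Rightarrow>real) (t::real). y n = 0 \<Longrightarrow> 0 < t \<Longrightarrow> t * y n = 0" by simp
        show "inj_on (\<lambda>q. q - 1) K"
        proof (rule inj_onI)
          fix a b assume "a \<in> K" "b \<in> K" "a - 1 = b - 1"
          then show "a = b" using K2[of a] K2[of b] by simp
        qed
        show "\<And>k y t. k \<in> K \<Longrightarrow> pd n (Hk k i l) (\<lambda>j. t * y j) = t ^ (k - 1) * pd n (Hk k i l) y"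
          by (rule hp_scale[OF hp_pd[OF hpk]])
        show "\<And>y. y n = 0 \<Longrightarrow> (\<Sum>k\<in>K. pd n (Hk k i l) y) = 0"
        proof -
          fix y :: "nat \<Rightarrow> real" assume y: "y n = 0"
          have "(\<Sum>k\<in>K. pd n (Hk k i l) y) = pd n (\<lambda>x. \<Sum>k\<in>K. Hk k i l x) y"
            by (rule pd_sum[symmetric, OF finK ipk])
          also have "\<dots> = pd n (H i l) y" unfolding Hil ..
          also have "\<dots> = 0" using H_dn[of i l y] i l y by blast
          finally show "(\<Sum>k\<in>K. pd n (Hk k i l) y) = 0" .
        qed
      qed
    qed
    show "\<And>i j a b x. i \<in> {1..n} \<Longrightarrow> j \<in> {1..n} \<Longrightarrow> a \<in> {1..n} \<Longrightarrow> b \<in> {1..n} \<Longrightarrow> x n = 0 \<Longrightarrow> Zten n (Hk q) i j a b x = 0"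
    proof -
      fix i j a b x assume i: "i \<in> {1..n}" and j: "j \<in> {1..n}" and a: "a \<in> {1..n}" and b: "b \<in> {1..n}" and x: "(x::nat\<Rightarrow>real) n = 0"
      show "Zten n (Hk q) i j a b x = 0"
      proof (rule transfer[where \<phi>="\<lambda>q y. Zten n (Hk q) i j a b y" and e="\<lambda>q. q - 2" and P="\<lambda>y. y n = 0" and x=x, OF finK _ q x])
        show "\<And>(y::nat\<Rightarrow>real) (t::real). y n = 0 \<Longrightarrow> 0 < t \<Longrightarrow> t * y n = 0" by simp
        show "inj_on (\<lambda>q. q - 2) K"
        proof (rule inj_onI)
          fix a b assume "a \<in> K" "b \<in> K" "a - 2 = b - 2"
          then show "a = b" using K2[of a] K2[of b] by simp
        qed
        show "\<And>k y t. k \<in> K \<Longrightarrow> Zten n (Hk k) i j a b (\<lambda>j. t * y j) = t ^ (k - 2) * Zten n (Hk k) i j a b y"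
          by (rule hp_scale[OF hp_Zten[OF hpk]])
        show "\<And>y. y n = 0 \<Longrightarrow> (\<Sum>k\<in>K. Zten n (Hk k) i j a b y) = 0"
        proof -
          fix y :: "nat \<Rightarrow> real" assume y: "y n = 0"
          have "(\<Sum>k\<in>K. Zten n (Hk k) i j a b y) = Zten n (\<lambda>i l x. \<Sum>k\<in>K. Hk k i l x) i j a b y"
            by (rule Zten_sum[symmetric, OF finK ipk])
          also have "\<dots> = Zten n H i j a b y" unfolding Hfun ..
          also have "\<dots> = 0" using Z0[of i j a b y] i j a b y by blast
          finally show "(\<Sum>k\<in>K. Zten n (Hk k) i j a b y) = 0" .
        qed
      qed
    qed
  qed
  show ?thesis
  proof (intro allI impI)
    fix x i c assume x: "(x::nat\<Rightarrow>real) n = 0" and i: "i \<in> {1..n-1}" and c: "c \<in> {1..n-1}"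
    have iT: "i \<in> TT n" and cT: "c \<in> TT n" using i c by (simp_all add: TT_def)
    have each: "\<And>q. q \<in> K \<Longrightarrow> Hk q i c x = 0 \<and> Aten n (Hk q) i c x = 0"
    proof -
      fix q assume q: "q \<in> K"
      have g: "gw0 n q (Hk q)" by (rule comp[OF q])
      show "Hk q i c x = 0 \<and> Aten n (Hk q) i c x = 0" using gw0.main0[OF g, of x i c] x iT cT by blast
    qed
    have "H i c x = (\<Sum>q\<in>K. Hk q i c x)" by (rule Hsum)
    also have "\<dots> = 0" using each by simp
    finally have h1: "H i c x = 0" .
    have "Aten n H i c x = Aten n (\<lambda>i l x. \<Sum>q\<in>K. Hk q i l x) i c x" unfolding Hfun ..
    also have "\<dots> = (\<Sum>q\<in>K. Aten n (Hk q) i c x)" by (rule Aten_sum[OF finK ipk])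
    also have "\<dots> = 0" using each by simp
    finally show "H i c x = 0 \<and> Aten n H i c x = 0" using h1 by simp
  qed
qed

end
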